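(* In the setting described in the context, assume there exists $\bar Z\in\mathbb{R}^{(n+m)\times n}$ with $\begin{bmatrix} I\\ \bar Z\end{bmatrix}^\top N\begin{bmatrix} I\\ \bar Z\end{bmatrix}>0$, and let $\gamma>0$. Then the data $(U_-,X)$ are informative for $\mathcal{H}_2$ control with performance $\gamma$ if and only if there exist symmetric $Y\in\mathbb{R}^{n\times n}$ with $Y>0$, symmetric $Z\in\mathbb{R}^{n\times n}$, $L\in\mathbb{R}^{m\times n}$ and scalars $\alpha\ge0$, $\beta>0$ such that, with $C_{Y,L}:=CY+DL$, $$\begin{bmatrix} Y-\beta I & 0 & 0 & 0 & 0\\ 0 & 0 & 0 & Y & 0\\ 0 & 0 & 0 & L & 0\\ 0 & Y & L^\top & Y & C_{Y,L}^\top\\ 0 & 0 & 0 & C_{Y,L} & I\end{bmatrix}-\alpha\begin{bmatrix} I & X_+\\ 0 & -X_-\\ 0 & -U_-\\ 0 & 0\\ 0 & 0\end{bmatrix}\begin{bmatrix}\Phi_{11} & \Phi_{12}\\ \Phi_{12}^\top & \Phi_{22}\end{bmatrix}\begin{bmatrix} I & X_+\\ 0 & -X_-\\ 0 & -U_-\\ 0 & 0\\ 0 & 0\end{bmatrix}^\top\ge0$$ (block sizes $n,n,m,n,p$), $\begin{bmatrix} Y & C_{Y,L}^\top\\ C_{Y,L} & I\end{bmatrix}>0$, $\begin{bmatrix} Z & I\\ I & Y\end{bmatrix}\ge0$ and $\operatorname{tr} Z<\gamma^2$. Moreover, if $Y,L$ (with some $Z,\alpha,\beta$) satisfy these conditions,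 then $K:=LY^{-1}$ is such that, for all $(A,B)\in\Sigma$, $A+BK$ is Schur stable and the transfer matrix $G(z)=(C+DK)(zI-(A+BK))^{-1}$ satisfies $\|G\|_{\mathcal{H}_2}<\gamma$.
   Context: Consider the system $x(t+1)=A_sx(t)+B_su(t)+w(t)$ with unknown $A_s\in\mathbb{R}^{n\times n}$, $B_s\in\mathbb{R}^{n\times m}$ and unknown noise $w$, and a performance output $z(t)=Cx(t)+Du(t)$ with known $C\in\mathbb{R}^{p\times n}$, $D\in\mathbb{R}^{p\times m}$. Data: $X_+=[x(1)\ \cdots\ x(T)]$, $X_-=[x(0)\ \cdots\ x(T-1)]$, $U_-=[u(0)\ \cdots\ u(T-1)]$, with $X_+=A_sX_-+B_sU_-+W_-$ where $W_-=[w(0)\ \cdots\ w(T-1)]$ satisfies $\begin{bmatrix} I\\ W_-^\top\end{bmatrix}^\top\begin{bmatrix}\Phi_{11} & \Phi_{12}\\ \Phi_{12}^\top & \Phi_{22}\end{bmatrix}\begin{bmatrix} I\\ W_-^\top\end{bmatrix}\ge0$ for known $\Phi_{11}=\Phi_{11}^\top\in\mathbb{R}^{n\times n}$, $\Phi_{12}\in\mathbb{R}^{n\times T}$, $\Phi_{22}=\Phi_{22}^\top\in\mathbb{R}^{T\times T}$, $\Phi_{22}<0$. $\Sigma$ is the set of all $(A,B)$ such that $X_+=AX_-+BU_-+W$ for some $W\in\mathbb{R}^{n\times T}$ satisfying the same noise inequality. $N:=\begin{bmatrix} I & X_+\\ 0 & -X_-\\ 0 & -U_-\end{bmatrix}\begin{bmatrix}\Phi_{11}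 & \Phi_{12}\\ \Phi_{12}^\top & \Phi_{22}\end{bmatrix}\begin{bmatrix} I & X_+\\ 0 & -X_-\\ 0 & -U_-\end{bmatrix}^\top$. The data are informative for $\mathcal{H}_2$ control with performance $\gamma$ if there exist symmetric $P>0$ and $K\in\mathbb{R}^{m\times n}$ such that for all $(A,B)\in\Sigma$: $P>(A+BK)^\top P(A+BK)+(C+DK)^\top(C+DK)$ and $\operatorname{tr}P<\gamma^2$. *)

theory Defs
  imports "HOL-Analysis.Analysis"
begin

text \<open>Matrices are rendered as \<open>real^'c^'r\<close> (rows indexed by 'r, columns by 'c).\<close>

definition hcat :: "real^'b^'a \<Rightarrow> real^'c^'a \<Rightarrow> real^('b + 'c)^'a" where
  "hcat M1 M2 = (\<chi> i j. case j of Inl b \<Rightarrow> M1 $ i $ b | Inr c \<Rightarrow> M2 $ i $ c)"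

definition vcat :: "real^'b^'a \<Rightarrow> real^'b^'c \<Rightarrow> real^'b^('a + 'c)" where
  "vcat M1 M2 = (\<chi> i. case i of Inl a \<Rightarrow> M1 $ a | Inr c \<Rightarrow> M2 $ c)"

definition psd :: "real^'n^'n \<Rightarrow> bool" where
  "psd M \<longleftrightarrow> transpose M = M \<and> (\<forall>x. 0 \<le> x \<bullet> (M *v x))"

definition pd :: "real^'n^'n \<Rightarrow> bool" where
  "pd M \<longleftrightarrow> transpose M = M \<and> (\<forall>x. x \<noteq> 0 \<longrightarrow> 0 < x \<bullet> (M *v x))"

primrec matpow :: "real^'n^'n \<Rightarrow> nat \<Rightarrow> real^'n^'n" where
  "matpow A 0 = mat 1"
| "matpow A (Suc k) = A ** matpow A k"

definition schur_stable :: "real^'n^'n \<Rightarrow> bool" where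
  "schur_stable A \<longleftrightarrow>
     (\<forall>(l::complex) (v::complex^'n). v \<noteq> 0 \<and>
        (\<chi> i j. complex_of_real (A $ i $ j)) *v v = l *s v \<longrightarrow> cmod l < 1)"

text \<open>Squared H2 norm of G(z) = Cc (zI - A)^{-1} = \<Sum>_{k\<ge>0} Cc A^k z^{-(k+1)},
  via its impulse response (Parseval): \<Sum>_k ||Cc A^k||_F^2.\<close>
definition h2_sq_terms :: "real^'n^'n \<Rightarrow> real^'n^'p \<Rightarrow> nat \<Rightarrow> real" where
  "h2_sq_terms A Cc k = trace (transpose (Cc ** matpow A k) ** (Cc ** matpow A k))"

definition h2_norm :: "real^'n^'n \<Rightarrow> real^'n^'p \<Rightarrow> real" where
  "h2_norm A Cc = sqrt (\<Sum>k. h2_sq_terms A Cc k)"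

definition Phi_mat :: "real^'n^'n \<Rightarrow> real^'T^'n \<Rightarrow> real^'T^'T \<Rightarrow> real^('n + 'T)^('n + 'T)" where
  "Phi_mat P11 P12 P22 = vcat (hcat P11 P12) (hcat (transpose P12) P22)"

definition noise_ok :: "real^'n^'n \<Rightarrow> real^'T^'n \<Rightarrow> real^'T^'T \<Rightarrow> real^'T^'n \<Rightarrow> bool" where
  "noise_ok P11 P12 P22 W \<longleftrightarrow>
     psd (transpose (vcat (mat 1) (transpose W)) ** Phi_mat P11 P12 P22 ** vcat (mat 1) (transpose W))"

definition Sigma_set :: "real^'n^'n \<Rightarrow> real^'T^'n \<Rightarrow> real^'T^'T \<Rightarrow>
    real^'T^'n \<Rightarrow> real^'T^'n \<Rightarrow> real^'T^'m \<Rightarrow> ((real^'n^'n) \<times> (real^'m^'n)) set" where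
  "Sigma_set P11 P12 P22 Xp Xm Um =
     {(A, B). \<exists>W. Xp = A ** Xm + B ** Um + W \<and> noise_ok P11 P12 P22 W}"

definition N_data_left :: "real^'T^'n \<Rightarrow> real^'T^'n \<Rightarrow> real^'T^'m \<Rightarrow> real^('n + 'T)^('n + ('n + 'm))" where
  "N_data_left Xp Xm Um = vcat (hcat (mat 1) Xp) (vcat (hcat 0 (- Xm)) (hcat 0 (- Um)))"

definition N_mat :: "real^'n^'n \<Rightarrow> real^'T^'n \<Rightarrow> real^'T^'T \<Rightarrow>
    real^'T^'n \<Rightarrow> real^'T^'n \<Rightarrow> real^'T^'m \<Rightarrow> real^('n + ('n + 'm))^('n + ('n + 'm))" where
  "N_mat P11 P12 P22 Xp Xm Um =
     N_data_left Xp Xm Um ** Phi_mat P11 P12 P22 ** transpose (N_data_left Xp Xm Um)"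

definition informative_H2 :: "real^'n^'n \<Rightarrow> real^'T^'n \<Rightarrow> real^'T^'T \<Rightarrow>
    real^'T^'n \<Rightarrow> real^'T^'n \<Rightarrow> real^'T^'m \<Rightarrow> real^'n^'p \<Rightarrow> real^'m^'p \<Rightarrow> real \<Rightarrow> bool" where
  "informative_H2 P11 P12 P22 Xp Xm Um C D \<gamma> \<longleftrightarrow>
     (\<exists>P K. pd P \<and> trace P < \<gamma>\<^sup>2 \<and>
       (\<forall>(A, B) \<in> Sigma_set P11 P12 P22 Xp Xm Um.
          pd (P - transpose (A + B ** K) ** P ** (A + B ** K)
                 - transpose (C + D ** K) ** (C + D ** K))))"

definition M5 :: "real^'T^'n \<Rightarrow> real^'T^'n \<Rightarrow> real^'T^'m \<Rightarrow>
    real^('n + 'T::finite)^('n::finite + ('n + ('m::finite + ('n + 'p::finite))))" where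
  "M5 Xp Xm Um = vcat (hcat (mat 1) Xp) (vcat (hcat 0 (- Xm)) (vcat (hcat 0 (- Um))
                   (vcat (0 :: real^('n + 'T)^'n) (0 :: real^('n + 'T)^'p))))"

definition LMI_block :: "real^'n^'n \<Rightarrow> real^'n^'m \<Rightarrow> real^'n^'p \<Rightarrow> real^'m^'p \<Rightarrow> real \<Rightarrow>
    real^('n + ('n + ('m + ('n + 'p))))^('n + ('n + ('m + ('n + 'p))))" where
  "LMI_block Y L C D \<beta> =
    (let CYL = C ** Y + D ** L in
     vcat (hcat (Y - \<beta> *\<^sub>R mat 1) (hcat (0::real^'n^'n) (hcat (0::real^'m^'n) (hcat (0::real^'n^'n) (0::real^'p^'n)))))
    (vcat (hcat (0::real^'n^'n) (hcat (0::real^'n^'n) (hcat (0::real^'m^'n) (hcat Y (0::real^'p^'n)))))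
    (vcat (hcat (0::real^'n^'m) (hcat (0::real^'n^'m) (hcat (0::real^'m^'m) (hcat L (0::real^'p^'m)))))
    (vcat (hcat (0::real^'n^'n) (hcat Y (hcat (transpose L) (hcat Y (transpose CYL)))))
          (hcat (0::real^'n^'p) (hcat (0::real^'n^'p) (hcat (0::real^'m^'p) (hcat CYL (mat 1)))))))))"

end

theory Submission
  imports Defs
begin


lemma sum_UNIV_Plus:
  "sum f (UNIV::('a::finite + 'b::finite) set) = sum (\<lambda>i. f (Inl i)) UNIV + sum (\<lambda>i. f (Inr i)) UNIV"
proof -
  have "sum f (UNIV <+> UNIV) = sum (f \<circ> Inl) UNIV + sum (f \<circ> Inr) UNIV" by (rule sum.Plus) auto
  thus ?thesis by (simp add: comp_def)
qed

declare transpose_matrix_vector[simp del] vector_transpose_matrix[simp del]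

definition vjoin :: "real^'a::finite \<Rightarrow> real^'b::finite \<Rightarrow> real^('a+'b)" where
  "vjoin a b = (\<chi> i. case i of Inl j \<Rightarrow> a$j | Inr k \<Rightarrow> b$k)"
definition vl :: "real^('a::finite+'b::finite) \<Rightarrow> real^'a" where "vl w = (\<chi> j. w $ Inl j)"
definition vr :: "real^('a::finite+'b::finite) \<Rightarrow> real^'b" where "vr w = (\<chi> j. w $ Inr j)"

lemma vjoin_nth_Inl [simp]: "vjoin a b $ Inl j = a $ j" by (simp add: vjoin_def)
lemma vjoin_nth_Inr [simp]: "vjoin a b $ Inr j = b $ j" by (simp add: vjoin_def)
lemma vl_vjoin [simp]: "vl (vjoin a b) = a" by (simp add: vl_def vec_eq_iff)
lemma vr_vjoin [simp]: "vr (vjoin a b) = b" by (simp add: vr_def vec_eq_iff)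
lemma vjoin_vl_vr: "vjoin (vl w) (vr w) = w"
  by (simp add: vec_eq_iff vl_def vr_def vjoin_def split: sum.split)
lemma vjoin_eq_iff [simp]: "vjoin a b = vjoin c d \<longleftrightarrow> a = c \<and> b = d"
  by (metis vl_vjoin vr_vjoin)
lemma vjoin_zero [simp]: "vjoin 0 0 = 0"
  by (simp add: vec_eq_iff vjoin_def split: sum.split)
lemma vjoin_eq_0_iff [simp]: "vjoin a b = 0 \<longleftrightarrow> a = 0 \<and> b = 0"
  by (metis vjoin_eq_iff vjoin_zero)
lemma vjoin_add: "vjoin a b + vjoin c d = vjoin (a + c) (b + d)"
  by (simp add: vec_eq_iff vjoin_def split: sum.split)
lemma vjoin_diff: "vjoin a b - vjoin c d = vjoin (a - c) (b - d)"
  by (simp add: vec_eq_iff vjoin_def split: sum.split)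
lemma vjoin_minus: "- vjoin a b = vjoin (- a) (- b)"
  by (simp add: vec_eq_iff vjoin_def split: sum.split)
lemma vjoin_scale: "c *\<^sub>R vjoin a b = vjoin (c *\<^sub>R a) (c *\<^sub>R b)"
  by (simp add: vec_eq_iff vjoin_def split: sum.split)
lemma inner_vjoin [simp]: "vjoin a b \<bullet> vjoin c d = a \<bullet> c + b \<bullet> d"
  by (simp add: inner_vec_def sum_UNIV_Plus)
lemma norm_vjoin_sq: "norm (vjoin a b) ^ 2 = norm a ^ 2 + norm b ^ 2"
  by (simp add: power2_norm_eq_inner)

lemma vl_add [simp]: "vl (x + y) = vl x + vl y" by (simp add: vl_def vec_eq_iff)
lemma vr_add [simp]: "vr (x + y) = vr x + vr y" by (simp add: vr_def vec_eq_iff)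
lemma vl_scale [simp]: "vl (c *\<^sub>R x) = c *\<^sub>R vl x" by (simp add: vl_def vec_eq_iff)
lemma vr_scale [simp]: "vr (c *\<^sub>R x) = c *\<^sub>R vr x" by (simp add: vr_def vec_eq_iff)
lemma vl_zero [simp]: "vl 0 = 0" by (simp add: vl_def vec_eq_iff)
lemma vr_zero [simp]: "vr 0 = 0" by (simp add: vr_def vec_eq_iff)
lemma linear_vl: "linear vl" by (rule linearI) simp_all
lemma linear_vr: "linear vr" by (rule linearI) simp_all

lemma hcat_mult: "hcat M1 M2 *v vjoin a b = M1 *v a + M2 *v b"
  by (simp add: hcat_def matrix_vector_mult_def vec_eq_iff sum_UNIV_Plus vjoin_def)
lemma vcat_mult: "vcat M1 M2 *v x = vjoin (M1 *v x) (M2 *v x)"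
  by (simp add: vcat_def matrix_vector_mult_def vec_eq_iff vjoin_def split: sum.split)
lemma hcat_mult': "hcat M1 M2 *v w = M1 *v vl w + M2 *v vr w"
  by (metis hcat_mult vjoin_vl_vr)
lemma transpose_vcat: "transpose (vcat A B) = hcat (transpose A) (transpose B)"
  by (simp add: transpose_def vcat_def hcat_def vec_eq_iff split: sum.split)
lemma transpose_hcat: "transpose (hcat A B) = vcat (transpose A) (transpose B)"
  by (simp add: transpose_def vcat_def hcat_def vec_eq_iff split: sum.split)

lemma inner_mat_sym: "transpose M = M \<Longrightarrow> x \<bullet> (M *v y) = y \<bullet> (M *v (x::real^'n))"
  by (metis dot_lmul_matrix inner_commute transpose_matrix_vector)
lemma inner_transpose: "x \<bullet> (transpose M *v y) = (M *v x) \<bullet> (y::real^'n)"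
  by (metis dot_lmul_matrix inner_commute transpose_matrix_vector)
lemma quad_sandwich: "x \<bullet> ((transpose M ** Q ** M) *v x) = (M *v x) \<bullet> (Q *v (M *v (x::real^'n)))"
  by (simp add: inner_transpose flip: matrix_vector_mul_assoc)

lemma transpose_add: "transpose (A + B) = transpose A + transpose (B::real^'n^'m)"
  by (simp add: transpose_def vec_eq_iff)
lemma transpose_diff: "transpose (A - B) = transpose A - transpose (B::real^'n^'m)"
  by (simp add: transpose_def vec_eq_iff)
lemma transpose_uminus: "transpose (- A) = - transpose (A::real^'n^'m)"
  by (simp add: transpose_def vec_eq_iff)
lemma transpose_zero [simp]: "transpose (0::real^'n^'m) = 0"
  by (simp add: transpose_def vec_eq_iff)
lemma uminus_mult_vec: "(- A) *v x = - (A *v (x::real^'n))"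
  by (simp add: matrix_vector_mult_def vec_eq_iff sum_negf)
lemma scaleR_mult_vec: "(k *\<^sub>R A) *v x = k *\<^sub>R (A *v (x::real^'n))"
  by (simp add: matrix_vector_mult_def vec_eq_iff sum_distrib_left mult.assoc)
lemma matrix_add_rdistrib': "(A + B) ** C = A ** C + B ** (C::real^'n^'m)"
  by (simp add: matrix_matrix_mult_def vec_eq_iff sum.distrib distrib_right)
lemma mvmult_assoc: "(A ** B) *v x = A *v (B *v x)"
  by (simp add: matrix_vector_mul_assoc)

lemmas blk_simps = vcat_mult hcat_mult matrix_vector_mult_add_rdistrib matrix_vector_mult_diff_rdistrib
  uminus_mult_vec scaleR_mult_vec mvmult_assoc transpose_vcat transpose_hcat transpose_add transpose_diff
  transpose_uminus matrix_transpose_mul vjoin_add vjoin_minus vjoin_diff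

lemma hcat_vcat: "hcat (vcat A B) (vcat C D) = vcat (hcat A C) (hcat B D)"
  by (simp add: hcat_def vcat_def vec_eq_iff split: sum.split)

lemma Phi_mult: "Phi_mat P11 P12 P22 *v vjoin a b = vjoin (P11 *v a + P12 *v b) (transpose P12 *v a + P22 *v b)"
  by (simp add: Phi_mat_def blk_simps)

lemma Phi_sym: "transpose P11 = P11 \<Longrightarrow> transpose P22 = P22 \<Longrightarrow> transpose (Phi_mat P11 P12 P22) = Phi_mat P11 P12 P22"
  by (simp add: Phi_mat_def blk_simps hcat_vcat)

lemma M5T_mult: "transpose (M5 Xp Xm Um :: real^('n::finite + 'T::finite)^('n + ('n + ('m::finite + ('n + 'p::finite))))) *v vjoin x (vjoin u1 (vjoin u2 (vjoin y z)))
   = vjoin x (transpose Xp *v x - transpose Xm *v u1 - transpose Um *v u2)"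
  by (simp add: M5_def blk_simps)

lemma NLT_mult: "transpose (N_data_left Xp Xm Um) *v vjoin x (vjoin u1 u2)
   = vjoin x (transpose Xp *v x - transpose Xm *v u1 - transpose Um *v u2)"
  by (simp add: N_data_left_def blk_simps)

lemma LMI_mult: "LMI_block Y L C D \<beta> *v vjoin x (vjoin u1 (vjoin u2 (vjoin y z))) =
  vjoin (Y *v x - \<beta> *\<^sub>R x) (vjoin (Y *v y) (vjoin (L *v y)
    (vjoin (Y *v u1 + transpose L *v u2 + Y *v y + transpose (C ** Y + D ** L) *v z) ((C ** Y + D ** L) *v y + z))))"
  by (simp add: LMI_block_def Let_def blk_simps)




lemma axis_inner: "axis i 1 \<bullet> (x::real^'n) = x $ i"
  by (simp add: inner_axis')

lemma mv_axis: "((M::real^'n^'m) *v axis i 1) $ j = M $ j $ i"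
  by (simp add: matrix_vector_mul_component inner_axis)

lemma trace_form: "trace (M::real^'n^'n) = (\<Sum>i\<in>UNIV. axis i 1 \<bullet> (M *v axis i 1))"
  by (simp add: trace_def axis_inner mv_axis)

lemma trace_TT: "trace (transpose M ** (M::real^'n^'p)) = (\<Sum>i\<in>UNIV. (M *v axis i 1) \<bullet> (M *v axis i 1))"
  by (simp add: trace_form inner_transpose mvmult_assoc)

lemma lyap_h2:
  fixes A :: "real^'n^'n" and Cc :: "real^'n^'p" and P :: "real^'n^'n"
  assumes Pp: "\<And>x. 0 \<le> x \<bullet> (P *v x)"
    and Ly: "\<And>x. (A *v x) \<bullet> (P *v (A *v x)) + (Cc *v x) \<bullet> (Cc *v x) \<le> x \<bullet> (P *v x)"
  shows "summable (h2_sq_terms A Cc) \<and> suminf (h2_sq_terms A Cc) \<le> trace P"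
proof -
  define s where "s k = (\<Sum>i\<in>UNIV. (matpow A k *v axis i 1) \<bullet> (P *v (matpow A k *v axis i 1)))" for k
  have t_eq: "h2_sq_terms A Cc k = (\<Sum>i\<in>UNIV. (Cc *v (matpow A k *v axis i 1)) \<bullet> (Cc *v (matpow A k *v axis i 1)))" for k
    by (simp add: h2_sq_terms_def trace_TT mvmult_assoc)
  have t_nn: "0 \<le> h2_sq_terms A Cc k" for k
    unfolding t_eq by (intro sum_nonneg) simp
  have step: "h2_sq_terms A Cc k \<le> s k - s (Suc k)" for k
  proof -
    have "h2_sq_terms A Cc k + s (Suc k) = (\<Sum>i\<in>UNIV. (A *v (matpow A k *v axis i 1)) \<bullet> (P *v (A *v (matpow A k *v axis i 1))) + (Cc *v (matpow A k *v axis i 1)) \<bullet> (Cc *v (matpow A k *v axis i 1)))"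
      by (simp add: t_eq s_def sum.distrib mvmult_assoc add.commute)
    also have "\<dots> \<le> s k" unfolding s_def by (intro sum_mono Ly)
    finally show ?thesis by simp
  qed
  have s_nn: "0 \<le> s k" for k unfolding s_def by (intro sum_nonneg Pp)
  have tel: "(\<Sum>k<N. h2_sq_terms A Cc k) \<le> s 0 - s N" for N
  proof (induction N)
    case 0 then show ?case by simp
  next
    case (Suc N) then show ?case using step[of N] by simp
  qed
  have s0: "s 0 = trace P" by (simp add: s_def trace_form)
  have bnd: "(\<Sum>k<N. h2_sq_terms A Cc k) \<le> trace P" for N
    using tel[of N] s_nn[of N] s0 by linarith
  have sm: "summable (h2_sq_terms A Cc)" by (rule summableI_nonneg_bounded[OF t_nn bnd])
  thus ?thesis using suminf_le_const[OF sm bnd] by simp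
qed

lemma lyap_schur:
  fixes A P :: "real^'n^'n"
  assumes Ppsd: "\<And>x. 0 \<le> x \<bullet> (P *v x)"
    and Ly: "\<And>x. x \<noteq> 0 \<Longrightarrow> (A *v x) \<bullet> (P *v (A *v x)) < x \<bullet> (P *v x)"
  shows "schur_stable A"
  unfolding schur_stable_def
proof (intro allI impI, elim conjE)
  fix l :: complex and v :: "complex^'n"
  assume vnz: "v \<noteq> 0" and ev: "(\<chi> i j. complex_of_real (A $ i $ j)) *v v = l *s v"
  define re where "re = (\<chi> i. Re (v $ i))"
  define im where "im = (\<chi> i. Im (v $ i))"
  have comp: "(\<Sum>j\<in>UNIV. complex_of_real (A $ i $ j) * v $ j) = l * v $ i" for i
    using arg_cong[OF ev, of "\<lambda>w. w $ i"] by (simp add: matrix_vector_mult_def)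
  have Are: "A *v re = Re l *\<^sub>R re - Im l *\<^sub>R im"
  proof -
    have "(A *v re) $ i = (Re l *\<^sub>R re - Im l *\<^sub>R im) $ i" for i
      using arg_cong[OF comp[of i], of Re]
      by (simp add: matrix_vector_mult_def re_def im_def Re_sum)
    thus ?thesis by (simp add: vec_eq_iff)
  qed
  have Aim: "A *v im = Im l *\<^sub>R re + Re l *\<^sub>R im"
  proof -
    have "(A *v im) $ i = (Im l *\<^sub>R re + Re l *\<^sub>R im) $ i" for i
      using arg_cong[OF comp[of i], of Im]
      by (simp add: matrix_vector_mult_def re_def im_def Im_sum algebra_simps)
    thus ?thesis by (simp add: vec_eq_iff)
  qed
  define f where "f = re \<bullet> (P *v re) + im \<bullet> (P *v im)"
  have key: "(A *v re) \<bullet> (P *v (A *v re)) + (A *v im) \<bullet> (P *v (A *v im)) = ((Re l)\<^sup>2 + (Im l)\<^sup>2) * f"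
    unfolding Are Aim f_def
    by (simp add: matrix_vector_mult_diff_distrib matrix_vector_right_distrib matrix_vector_mult_scaleR
        inner_diff_left inner_diff_right inner_add_left inner_add_right algebra_simps power2_eq_square)
  have nz: "re \<noteq> 0 \<or> im \<noteq> 0"
  proof (rule ccontr)
    assume "\<not> (re \<noteq> 0 \<or> im \<noteq> 0)"
    hence "re = 0" "im = 0" by auto
    hence "v $ i = 0" for i
      using \<open>re = 0\<close> \<open>im = 0\<close> unfolding re_def im_def vec_eq_iff by (simp add: complex_eq_iff)
    thus False using vnz by (simp add: vec_eq_iff)
  qed
  have l1: "(A *v re) \<bullet> (P *v (A *v re)) \<le> re \<bullet> (P *v re)"
    by (cases "re = 0") (auto dest: Ly[of re])
  have l2: "(A *v im) \<bullet> (P *v (A *v im)) \<le> im \<bullet> (P *v im)"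
    by (cases "im = 0") (auto dest: Ly[of im])
  have strict: "(A *v re) \<bullet> (P *v (A *v re)) + (A *v im) \<bullet> (P *v (A *v im)) < f"
    using nz l1 l2 Ly[of re] Ly[of im] unfolding f_def by auto
  have fpos: "0 < f"
    using strict Ppsd[of "A *v re"] Ppsd[of "A *v im"] by linarith
  have "((Re l)\<^sup>2 + (Im l)\<^sup>2) < 1"
  proof -
    have "((Re l)\<^sup>2 + (Im l)\<^sup>2) * f < 1 * f" using strict key by simp
    thus ?thesis using fpos mult_less_cancel_right_pos by blast
  qed
  thus "cmod l < 1" by (simp add: cmod_def)
qed

lemma pd_invertible:
  fixes Y :: "real^'n^'n"
  assumes "pd Y"
  shows "Y ** matrix_inv Y = mat 1 \<and> matrix_inv Y ** Y = mat 1"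
proof -
  have "\<forall>x. Y *v x = 0 \<longrightarrow> x = 0"
    using assms unfolding pd_def by (metis inner_zero_right less_irrefl)
  hence "\<exists>B. B ** Y = mat 1" by (simp add: matrix_left_invertible_ker)
  hence "invertible Y" by (simp add: invertible_left_inverse)
  hence "\<exists>A'. Y ** A' = mat 1 \<and> A' ** Y = mat 1" by (simp add: invertible_def)
  thus ?thesis unfolding matrix_inv_def by (rule someI_ex)
qed

lemma pd_inv:
  fixes Y :: "real^'n^'n"
  assumes pdY: "pd Y"
  defines "P \<equiv> matrix_inv Y"
  shows "Y ** P = mat 1" "P ** Y = mat 1" "transpose P = P" "pd P"
    "\<And>x. Y *v (P *v x) = x" "\<And>x. P *v (Y *v x) = x"
proof -
  show YP: "Y ** P = mat 1" and PY: "P ** Y = mat 1" using pd_invertible[OF pdY] by (auto simp: P_def)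
  show YPx: "\<And>x. Y *v (P *v x) = x" by (simp add: mvmult_assoc[symmetric] YP)
  show "\<And>x. P *v (Y *v x) = x" by (simp add: mvmult_assoc[symmetric] PY)
  have Ys: "transpose Y = Y" using pdY by (simp add: pd_def)
  have "transpose P ** Y = mat 1"
    by (metis YP Ys matrix_transpose_mul transpose_mat)
  hence "transpose P = P"
    by (metis PY YP matrix_mul_assoc matrix_mul_lid matrix_mul_rid)
  thus Ps: "transpose P = P" .
  show "pd P" unfolding pd_def
  proof (intro conjI allI impI Ps)
    fix x :: "real^'n" assume "x \<noteq> 0"
    hence nz: "P *v x \<noteq> 0" using YPx[of x] by auto
    have "x \<bullet> (P *v x) = (P *v x) \<bullet> (Y *v (P *v x))"
      by (simp add: YPx inner_commute)
    thus "0 < x \<bullet> (P *v x)" using pdY nz by (simp add: pd_def)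
  qed
qed

lemma LMI_form:
  assumes "transpose Y = Y"
  shows "vjoin x (vjoin u1 (vjoin u2 (vjoin y z))) \<bullet> (LMI_block Y L C D \<beta> *v vjoin x (vjoin u1 (vjoin u2 (vjoin y z))))
    = x \<bullet> (Y *v x) - \<beta> * (x \<bullet> x) + 2 * (u1 \<bullet> (Y *v y)) + 2 * (u2 \<bullet> (L *v y)) + y \<bullet> (Y *v y)
      + 2 * (z \<bullet> ((C ** Y + D ** L) *v y)) + z \<bullet> z"
proof -
  have a: "y \<bullet> (Y *v u1) = u1 \<bullet> (Y *v y)" by (rule inner_mat_sym[OF assms])
  have b: "y \<bullet> (transpose L *v u2) = u2 \<bullet> (L *v y)" by (simp add: inner_transpose inner_commute)
  have c: "y \<bullet> (transpose (C ** Y + D ** L) *v z) = z \<bullet> ((C ** Y + D ** L) *v y)"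
    by (simp add: inner_transpose inner_commute)
  show ?thesis
    by (simp add: LMI_mult inner_add_right inner_diff_right a b c inner_commute[of y "Y *v y"])
qed

lemma form_b2:
  "vjoin a b \<bullet> (vcat (hcat Y (transpose CY)) (hcat CY (mat 1)) *v vjoin a b) = a \<bullet> (Y *v a) + 2 * (b \<bullet> (CY *v a)) + b \<bullet> b"
  by (simp add: blk_simps inner_add_right inner_transpose inner_commute)

lemma form_G5:
  "(w::real^'n) \<bullet> ((M ** Q ** transpose M) *v w) = (transpose M *v w) \<bullet> (Q *v (transpose M *v w))"
  using quad_sandwich[of w "transpose M" Q] by simp

lemma noise_form:
  assumes "noise_ok P11 P12 P22 W"
  shows "0 \<le> vjoin x (transpose W *v x) \<bullet> (Phi_mat P11 P12 P22 *v vjoin x (transpose W *v x))"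
  using assms unfolding noise_ok_def psd_def
  by (metis quad_sandwich vcat_mult matrix_vector_mul_lid)

lemma matrix_vector_mult_minus_right: "A *v (- x) = - (A *v (x::real^'n))"
  by (simp add: matrix_vector_mult_def vec_eq_iff sum_negf)

lemma form_Q:
  "x \<bullet> ((P - transpose Acl ** P ** Acl - transpose CK ** CK) *v x)
   = x \<bullet> (P *v x) - (Acl *v x) \<bullet> (P *v (Acl *v x)) - (CK *v x) \<bullet> (CK *v (x::real^'n))"
proof -
  have "x \<bullet> ((transpose CK ** CK) *v x) = (CK *v x) \<bullet> (CK *v x)"
    using quad_sandwich[of x CK "mat 1"] by simp
  thus ?thesis by (simp add: matrix_vector_mult_diff_rdistrib inner_diff_right quad_sandwich)
qed

lemma sym_Q:
  assumes "transpose P = P"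
  shows "transpose (P - transpose Acl ** P ** Acl - transpose CK ** (CK::real^'n^'p)) = P - transpose Acl ** P ** Acl - transpose CK ** CK"
  using assms by (simp add: transpose_diff matrix_transpose_mul matrix_mul_assoc)

lemma suff:
  fixes Y :: "real^'n^'n" and L :: "real^'n^'m" and C :: "real^'n^'p" and D :: "real^'m^'p"
    and Xp Xm :: "real^'T^'n" and Um :: "real^'T^'m"
  assumes pdY: "pd Y" and al: "\<alpha> \<ge> 0" and be: "\<beta> > 0"
    and lmi: "psd (LMI_block Y L C D \<beta> - \<alpha> *\<^sub>R (M5 Xp Xm Um ** Phi_mat Phi11 Phi12 Phi22 ** transpose (M5 Xp Xm Um :: real^_^('n + ('n + ('m + ('n + 'p)))))))"
    and b2: "pd (vcat (hcat Y (transpose (C ** Y + D ** L))) (hcat (C ** Y + D ** L) (mat 1)))"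
    and AB: "(A, B) \<in> Sigma_set Phi11 Phi12 Phi22 Xp Xm Um"
  defines "P \<equiv> matrix_inv Y"
  defines "K \<equiv> L ** P"
  shows "pd (P - transpose (A + B ** K) ** P ** (A + B ** K) - transpose (C + D ** K) ** (C + D ** K))"
proof -
  note inv = pd_inv[OF pdY, folded P_def]
  have Ys: "transpose Y = Y" using pdY by (simp add: pd_def)
  obtain W where XpW: "Xp = A ** Xm + B ** Um + W" and nW: "noise_ok Phi11 Phi12 Phi22 W"
    using AB by (auto simp: Sigma_set_def)
  define Acl where "Acl = A + B ** K"
  define CK where "CK = C + D ** K"
  define CYL where "CYL = C ** Y + D ** L"
  have formQ: "\<xi> \<bullet> (P *v \<xi>) - (Acl *v \<xi>) \<bullet> (P *v (Acl *v \<xi>)) - (CK *v \<xi>) \<bullet> (CK *v \<xi>) > 0"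
    if xnz: "\<xi> \<noteq> 0" for \<xi>
  proof -
    define a where "a = Acl *v \<xi>"
    define x where "x = P *v a"
    define u1 where "u1 = transpose A *v x"
    define u2 where "u2 = transpose B *v x"
    define y where "y = - (P *v \<xi>)"
    define z where "z = CK *v \<xi>"
    define w where "w = vjoin x (vjoin u1 (vjoin u2 (vjoin y z)))"
    have "0 \<le> w \<bullet> ((LMI_block Y L C D \<beta> - \<alpha> *\<^sub>R (M5 Xp Xm Um ** Phi_mat Phi11 Phi12 Phi22 ** transpose (M5 Xp Xm Um :: real^_^('n + ('n + ('m + ('n + 'p))))))) *v w)"
      using lmi by (simp add: psd_def)
    also have "\<dots> = w \<bullet> (LMI_block Y L C D \<beta> *v w) - \<alpha> * (w \<bullet> ((M5 Xp Xm Um ** Phi_mat Phi11 Phi12 Phi22 ** transpose (M5 Xp Xm Um :: real^_^('n + ('n + ('m + ('n + 'p)))))) *v w))"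
      by (simp add: matrix_vector_mult_diff_rdistrib scaleR_mult_vec inner_diff_right)
    finally have lm: "0 \<le> w \<bullet> (LMI_block Y L C D \<beta> *v w) - \<alpha> * (w \<bullet> ((M5 Xp Xm Um ** Phi_mat Phi11 Phi12 Phi22 ** transpose (M5 Xp Xm Um :: real^_^('n + ('n + ('m + ('n + 'p)))))) *v w))" .
    have M5w: "transpose (M5 Xp Xm Um :: real^_^('n + ('n + ('m + ('n + 'p))))) *v w = vjoin x (transpose W *v x)"
    proof -
      have "transpose Xp *v x = transpose Xm *v u1 + transpose Um *v u2 + transpose W *v x"
        by (simp add: XpW u1_def u2_def transpose_add matrix_transpose_mul matrix_vector_mult_add_rdistrib mvmult_assoc)
      thus ?thesis by (simp add: w_def M5T_mult)
    qed
    have g: "0 \<le> w \<bullet> ((M5 Xp Xm Um ** Phi_mat Phi11 Phi12 Phi22 ** transpose (M5 Xp Xm Um :: real^_^('n + ('n + ('m + ('n + 'p)))))) *v w)"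
      unfolding form_G5 M5w by (rule noise_form[OF nW])
    have lm2: "0 \<le> w \<bullet> (LMI_block Y L C D \<beta> *v w)" using lm g al
      by (smt (verit) mult_nonneg_nonneg)
    have e1: "Y *v (P *v \<xi>) = \<xi>" by (rule inv(5))
    have e2: "L *v (P *v \<xi>) = K *v \<xi>" by (simp add: K_def mvmult_assoc)
    have e3: "CYL *v (P *v \<xi>) = z"
      by (simp add: CYL_def z_def CK_def matrix_vector_mult_add_rdistrib mvmult_assoc e1 e2)
    have e4: "x \<bullet> (Y *v x) = a \<bullet> (P *v a)"
      by (simp add: x_def inv(5) inner_commute)
    have e5: "u1 \<bullet> \<xi> + u2 \<bullet> (K *v \<xi>) = a \<bullet> (P *v a)"
    proof -
      have "u1 \<bullet> \<xi> + u2 \<bullet> (K *v \<xi>) = x \<bullet> a"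
        by (simp add: u1_def u2_def a_def Acl_def inner_transpose inner_commute matrix_vector_mult_add_rdistrib
            mvmult_assoc inner_add_right)
      thus ?thesis by (simp add: x_def inner_mat_sym[OF inv(3)] inner_commute)
    qed
    have e6: "(P *v \<xi>) \<bullet> (Y *v (P *v \<xi>)) = \<xi> \<bullet> (P *v \<xi>)"
      by (simp add: e1 inner_commute)
    have val: "w \<bullet> (LMI_block Y L C D \<beta> *v w) = \<xi> \<bullet> (P *v \<xi>) - a \<bullet> (P *v a) - z \<bullet> z - \<beta> * (x \<bullet> x)"
      unfolding w_def LMI_form[OF Ys]
      using e4 e5 e6 e3 e1 e2 unfolding y_def CYL_def
      by (simp add: matrix_vector_mult_minus_right inner_minus_right algebra_simps)
    show ?thesis
    proof (cases "x = 0")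
      case False
      hence "0 < x \<bullet> x" by simp
      hence "0 < \<beta> * (x \<bullet> x)" using be by simp
      thus ?thesis using lm2 val by (simp add: a_def z_def)
    next
      case True
      hence a0: "a = 0" using inv(5)[of a] by (simp add: x_def)
      have "vjoin (P *v \<xi>) (- z) \<noteq> 0" using inv(5)[of \<xi>] xnz by auto
      hence "0 < vjoin (P *v \<xi>) (- z) \<bullet> (vcat (hcat Y (transpose CYL)) (hcat CYL (mat 1)) *v vjoin (P *v \<xi>) (- z))"
        using b2 unfolding pd_def CYL_def by blast
      hence "0 < \<xi> \<bullet> (P *v \<xi>) - z \<bullet> z"
        unfolding form_b2 e3 e6 by simp
      thus ?thesis using a0 by (simp add: a_def z_def)
    qed
  qed
  show ?thesis unfolding pd_def
  proof (intro conjI allI impI)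
    show "transpose (P - transpose (A + B ** K) ** P ** (A + B ** K) - transpose (C + D ** K) ** (C + D ** K)) = P - transpose (A + B ** K) ** P ** (A + B ** K) - transpose (C + D ** K) ** (C + D ** K)"
      by (rule sym_Q[OF inv(3)])
    fix \<xi> :: "real^'n" assume "\<xi> \<noteq> 0"
    thus "0 < \<xi> \<bullet> ((P - transpose (A + B ** K) ** P ** (A + B ** K) - transpose (C + D ** K) ** (C + D ** K)) *v \<xi>)"
      using formQ unfolding form_Q Acl_def CK_def by simp
  qed
qed

lemma trace_le_Z:
  fixes Y Z :: "real^'n^'n"
  assumes pdY: "pd Y" and ps: "psd (vcat (hcat Z (mat 1)) (hcat (mat 1) Y))"
  shows "trace (matrix_inv Y) \<le> trace Z"
proof -
  note inv = pd_inv[OF pdY]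
  have "\<xi> \<bullet> (matrix_inv Y *v \<xi>) \<le> \<xi> \<bullet> (Z *v \<xi>)" for \<xi>
  proof -
    define v where "v = matrix_inv Y *v \<xi>"
    have "0 \<le> vjoin \<xi> (- v) \<bullet> (vcat (hcat Z (mat 1)) (hcat (mat 1) Y) *v vjoin \<xi> (- v))"
      using ps by (simp add: psd_def)
    also have "\<dots> = \<xi> \<bullet> (Z *v \<xi>) - \<xi> \<bullet> v"
      using inv(5)[of \<xi>] by (simp add: blk_simps v_def matrix_vector_mult_minus_right inner_add_right inner_diff_right inner_commute)
    finally show ?thesis by (simp add: v_def)
  qed
  thus ?thesis unfolding trace_form by (intro sum_mono)
qed

lemma lmi_part:
  fixes Y Z :: "real^'n^'n" and L :: "real^'n^'m" and C :: "real^'n^'p" and D :: "real^'m^'p"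
    and Xp Xm :: "real^'T^'n" and Um :: "real^'T^'m"
  assumes pdY: "pd Y" and al: "\<alpha> \<ge> 0" and be: "\<beta> > 0"
    and lmi: "psd (LMI_block Y L C D \<beta> - \<alpha> *\<^sub>R (M5 Xp Xm Um ** Phi_mat Phi11 Phi12 Phi22 ** transpose (M5 Xp Xm Um :: real^_^('n + ('n + ('m + ('n + 'p)))))))"
    and b2: "pd (vcat (hcat Y (transpose (C ** Y + D ** L))) (hcat (C ** Y + D ** L) (mat 1)))"
    and ps: "psd (vcat (hcat Z (mat 1)) (hcat (mat 1) Y))"
    and tr: "trace Z < \<gamma>\<^sup>2" and gp: "\<gamma> > 0"
  shows "informative_H2 Phi11 Phi12 Phi22 Xp Xm Um C D \<gamma>"
    "(let K = L ** matrix_inv Y in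
                 \<forall>(A, B) \<in> Sigma_set Phi11 Phi12 Phi22 Xp Xm Um.
                   schur_stable (A + B ** K) \<and>
                   summable (h2_sq_terms (A + B ** K) (C + D ** K)) \<and>
                   h2_norm (A + B ** K) (C + D ** K) < \<gamma>)"
proof -
  define P where "P = matrix_inv Y"
  define K where "K = L ** P"
  note inv = pd_inv[OF pdY, folded P_def]
  have trP: "trace P < \<gamma>\<^sup>2" using trace_le_Z[OF pdY ps] tr by (simp add: P_def)
  have Q: "pd (P - transpose (A + B ** K) ** P ** (A + B ** K) - transpose (C + D ** K) ** (C + D ** K))"
    if "(A, B) \<in> Sigma_set Phi11 Phi12 Phi22 Xp Xm Um" for A B
    using suff[OF pdY al be lmi b2 that] by (simp add: P_def K_def)
  show "informative_H2 Phi11 Phi12 Phi22 Xp Xm Um C D \<gamma>"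
    unfolding informative_H2_def using inv(4) trP Q by blast
  have Ppsd: "0 \<le> x \<bullet> (P *v x)" for x
    using inv(4) unfolding pd_def by (cases "x = 0") (auto intro: less_imp_le)
  show "(let K = L ** matrix_inv Y in
                 \<forall>(A, B) \<in> Sigma_set Phi11 Phi12 Phi22 Xp Xm Um.
                   schur_stable (A + B ** K) \<and>
                   summable (h2_sq_terms (A + B ** K) (C + D ** K)) \<and>
                   h2_norm (A + B ** K) (C + D ** K) < \<gamma>)"
    unfolding Let_def P_def[symmetric] K_def[symmetric]
  proof (intro ballI, clarify)
    fix A B assume AB: "(A, B) \<in> Sigma_set Phi11 Phi12 Phi22 Xp Xm Um"
    have QA: "x \<noteq> 0 \<Longrightarrow> ((A + B ** K) *v x) \<bullet> (P *v ((A + B ** K) *v x)) + ((C + D ** K) *v x) \<bullet> ((C + D ** K) *v x) < x \<bullet> (P *v x)" for x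
      using Q[OF AB] unfolding pd_def form_Q by auto
    have Ly: "((A + B ** K) *v x) \<bullet> (P *v ((A + B ** K) *v x)) + ((C + D ** K) *v x) \<bullet> ((C + D ** K) *v x) \<le> x \<bullet> (P *v x)" for x
      using QA[of x] by (cases "x = 0") auto
    have Ly2: "x \<noteq> 0 \<Longrightarrow> ((A + B ** K) *v x) \<bullet> (P *v ((A + B ** K) *v x)) < x \<bullet> (P *v x)" for x
      using QA[of x] by (smt (verit) inner_ge_zero)
    have h2: "summable (h2_sq_terms (A + B ** K) (C + D ** K)) \<and> suminf (h2_sq_terms (A + B ** K) (C + D ** K)) \<le> trace P"
      by (rule lyap_h2[OF Ppsd Ly])
    have "h2_norm (A + B ** K) (C + D ** K) < \<gamma>"
    proof -
      have "suminf (h2_sq_terms (A + B ** K) (C + D ** K)) < \<gamma>\<^sup>2" using h2 trP by linarith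
      hence "sqrt (suminf (h2_sq_terms (A + B ** K) (C + D ** K))) < sqrt (\<gamma>\<^sup>2)" by (simp only: real_sqrt_less_iff)
      thus ?thesis using gp by (simp add: h2_norm_def)
    qed
    thus "schur_stable (A + B ** K) \<and> summable (h2_sq_terms (A + B ** K) (C + D ** K)) \<and> h2_norm (A + B ** K) (C + D ** K) < \<gamma>"
      using h2 lyap_schur[OF Ppsd Ly2] by blast
  qed
qed




lemma quad_expand:
  assumes "transpose F = F"
  shows "(x + t *\<^sub>R y) \<bullet> (F *v (x + t *\<^sub>R y)) = x \<bullet> (F *v x) + 2 * t * (x \<bullet> (F *v y)) + t\<^sup>2 * (y \<bullet> (F *v (y::real^'k)))"
proof -
  have "y \<bullet> (F *v x) = x \<bullet> (F *v y)" by (rule inner_mat_sym[OF assms])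
  thus ?thesis
    by (simp add: matrix_vector_right_distrib matrix_vector_mult_scaleR inner_add_left inner_add_right
        algebra_simps power2_eq_square)
qed

lemma s_lemma_cross:
  fixes F G :: "real^'k^'k"
  assumes sF: "transpose F = F" and sG: "transpose G = G"
    and hyp: "\<And>w. 0 \<le> w \<bullet> (G *v w) \<Longrightarrow> 0 \<le> w \<bullet> (F *v w)"
    and gx: "x \<bullet> (G *v x) > 0" and gy: "y \<bullet> (G *v y) < 0"
  shows "(y \<bullet> (F *v y)) * (x \<bullet> (G *v x)) \<ge> (x \<bullet> (F *v x)) * (y \<bullet> (G *v y))"
proof -
  define a where "a = x \<bullet> (G *v x)"
  define c where "c = y \<bullet> (G *v y)"
  define b where "b = x \<bullet> (G *v y)"
  define fx where "fx = x \<bullet> (F *v x)"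
  define fy where "fy = y \<bullet> (F *v y)"
  define fb where "fb = x \<bullet> (F *v y)"
  have a0: "a > 0" and c0: "c < 0" using gx gy by (simp_all add: a_def c_def)
  define r where "r = sqrt (b\<^sup>2 - a * c)"
  have ac: "a * c < 0" using a0 c0 by (simp add: mult_pos_neg)
  have nn: "0 \<le> b\<^sup>2 - a * c" using ac by (smt (verit) zero_le_power2)
  hence rsq: "r\<^sup>2 = b\<^sup>2 - a * c" unfolding r_def by (rule real_sqrt_pow2)
  have "\<bar>b\<bar>\<^sup>2 < r\<^sup>2" using rsq ac by simp
  moreover have "r \<ge> 0" unfolding r_def using nn by simp
  ultimately have rb: "r > \<bar>b\<bar>" using power2_less_imp_less by blast
  define t1 where "t1 = (- b + r) / c"
  define t2 where "t2 = (- b - r) / c"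
  have t1n: "t1 < 0" unfolding t1_def using rb c0 by (simp add: divide_pos_neg divide_neg_pos abs_less_iff)
  have t2p: "t2 > 0" unfolding t2_def using rb c0 by (simp add: divide_neg_neg abs_less_iff)
  have root: "a + 2 * t * b + t\<^sup>2 * c = 0" if "t = t1 \<or> t = t2" for t
  proof -
    have "c * (a + 2 * t * b + t\<^sup>2 * c) = a * c + 2 * b * (c * t) + (c * t)\<^sup>2"
      by (simp add: algebra_simps power2_eq_square)
    also have "\<dots> = 0"
    proof -
      have "c * t = - b + r \<or> c * t = - b - r" using that c0 by (auto simp: t1_def t2_def)
      moreover have "a * c + 2 * b * (- b + r) + (- b + r)\<^sup>2 = a * c - b\<^sup>2 + r\<^sup>2"
        by (simp add: power2_eq_square algebra_simps)
      moreover have "a * c + 2 * b * (- b - r) + (- b - r)\<^sup>2 = a * c - b\<^sup>2 + r\<^sup>2"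
        by (simp add: power2_eq_square algebra_simps)
      ultimately show ?thesis using rsq by auto
    qed
    finally show ?thesis using c0 by simp
  qed
  have fnn: "0 \<le> fx + 2 * t * fb + t\<^sup>2 * fy" if "t = t1 \<or> t = t2" for t
  proof -
    have "0 \<le> (x + t *\<^sub>R y) \<bullet> (G *v (x + t *\<^sub>R y))"
      using root[OF that] by (simp add: quad_expand[OF sG] a_def b_def c_def)
    hence "0 \<le> (x + t *\<^sub>R y) \<bullet> (F *v (x + t *\<^sub>R y))" by (rule hyp)
    thus ?thesis by (simp add: quad_expand[OF sF] fx_def fb_def fy_def)
  qed
  define mu where "mu = fx / a"
  define p1 where "p1 = fb - mu * b"
  define p2 where "p2 = fy - mu * c"
  have phi: "fx + 2 * t * fb + t\<^sup>2 * fy = t * (2 * p1 + t * p2)" if "t = t1 \<or> t = t2" for t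
  proof -
    have "fx + 2 * t * fb + t\<^sup>2 * fy = (fx + 2 * t * fb + t\<^sup>2 * fy) - mu * (a + 2 * t * b + t\<^sup>2 * c)"
      using root[OF that] by simp
    also have "\<dots> = t * (2 * p1 + t * p2)" using a0 unfolding mu_def p1_def p2_def
      by (simp add: field_simps power2_eq_square)
    finally show ?thesis .
  qed
  have i1: "2 * p1 + t1 * p2 \<le> 0"
    using fnn[of t1] phi[of t1] t1n by (simp add: zero_le_mult_iff)
  have i2: "2 * p1 + t2 * p2 \<ge> 0"
    using fnn[of t2] phi[of t2] t2p by (simp add: zero_le_mult_iff)
  have "(t2 - t1) * p2 \<ge> 0" using i1 i2 by (simp add: algebra_simps)
  hence "p2 \<ge> 0" using t1n t2p by (simp add: zero_le_mult_iff)
  hence "fy - fx / a * c \<ge> 0" by (simp add: p2_def mu_def)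
  hence "fy * a - fx * c \<ge> 0" using a0 by (simp add: field_simps)
  thus ?thesis by (simp add: fy_def fx_def a_def c_def)
qed

lemma s_lemma:
  fixes F G :: "real^'k^'k"
  assumes sF: "transpose F = F" and sG: "transpose G = G"
    and hyp: "\<And>w. 0 \<le> w \<bullet> (G *v w) \<Longrightarrow> 0 \<le> w \<bullet> (F *v w)"
    and sl: "w0 \<bullet> (G *v w0) > 0"
  shows "\<exists>l\<ge>0. \<forall>w. l * (w \<bullet> (G *v w)) \<le> w \<bullet> (F *v w)"
proof -
  define f where "f w = w \<bullet> (F *v w)" for w
  define g where "g w = w \<bullet> (G *v w)" for w
  define S where "S = insert 0 {f y / g y | y. g y < 0}"
  define lam where "lam = Sup S"
  have cross: "g x > 0 \<Longrightarrow> g y < 0 \<Longrightarrow> f y / g y \<le> f x / g x" for x y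
  proof -
    assume gx: "g x > 0" and gy: "g y < 0"
    have "f y * g x \<ge> f x * g y" using s_lemma_cross[OF sF sG hyp] gx gy unfolding f_def g_def by blast
    thus ?thesis using gx gy by (simp add: field_simps)
  qed
  have fpos: "g x \<ge> 0 \<Longrightarrow> f x \<ge> 0" for x using hyp unfolding f_def g_def by blast
  have ub: "s \<le> f w0 / g w0" if "s \<in> S" for s
    using that sl cross[of w0] fpos[of w0] unfolding S_def g_def[symmetric] by auto
  have bdd: "bdd_above S" using ub by (auto simp: bdd_above_def)
  have lam0: "0 \<le> lam" unfolding lam_def using bdd by (intro cSup_upper) (auto simp: S_def)
  have "\<forall>w. lam * g w \<le> f w"
  proof
    fix w
    consider "g w < 0" | "g w = 0" | "g w > 0" by linarith
    thus "lam * g w \<le> f w"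
    proof cases
      case 1
      hence "f w / g w \<le> lam" unfolding lam_def using bdd by (intro cSup_upper) (auto simp: S_def)
      thus ?thesis using 1 by (simp add: divide_le_eq mult.commute)
    next
      case 2 thus ?thesis using fpos[of w] by simp
    next
      case 3
      have "lam \<le> f w / g w" unfolding lam_def
      proof (rule cSup_least)
        show "S \<noteq> {}" by (simp add: S_def)
        fix s assume "s \<in> S"
        thus "s \<le> f w / g w" using 3 cross[of w] fpos[of w] unfolding S_def by auto
      qed
      thus ?thesis using 3 by (simp add: le_divide_eq)
    qed
  qed
  thus ?thesis using lam0 unfolding f_def g_def by blast
qed




definition outer :: "real^'a \<Rightarrow> real^'b \<Rightarrow> real^'b^'a" where
  "outer c u = (\<chi> i j. c $ i * u $ j)"

lemma outer_mult: "outer c u *v x = (u \<bullet> x) *\<^sub>R c"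
  by (simp add: outer_def matrix_vector_mult_def vec_eq_iff inner_vec_def sum_distrib_left mult_ac)

lemma outer_mmult: "outer c u ** M = outer c (transpose M *v u)"
  by (simp add: outer_def matrix_matrix_mult_def vec_eq_iff matrix_vector_mult_def transpose_def sum_distrib_left mult_ac)

lemma outer_add2: "outer c u + outer c v = outer c (u + v)"
  by (simp add: outer_def vec_eq_iff algebra_simps)

lemma outer_zero2 [simp]: "outer c 0 = 0"
  by (simp add: outer_def vec_eq_iff)

lemma test_cont: "continuous_on UNIV (\<lambda>w::real^'k. w \<bullet> (M *v w))"
  by (intro continuous_intros)

lemma matrix_sub_ldistrib: "(A::real^'n^'m) ** (B - C) = A ** B - A ** C"
  by (simp add: matrix_matrix_mult_def vec_eq_iff sum_subtractf right_diff_distrib)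

lemma sym_solve:
  fixes M :: "real^'k^'k"
  assumes sM: "transpose M = M" and ker: "\<And>d. M *v d = 0 \<Longrightarrow> c \<bullet> d = 0"
  shows "\<exists>z. M *v z = c"
proof -
  have sub: "subspace (range ((*v) M))"
    using linear_subspace_image[OF matrix_vector_mul_linear subspace_UNIV] by blast
  obtain y z where y: "y \<in> span (range ((*v) M))" and z: "\<And>w. w \<in> span (range ((*v) M)) \<Longrightarrow> orthogonal z w"
    and c: "c = y + z"
    using orthogonal_subspace_decomp_exists by blast
  have yr: "y \<in> range ((*v) M)" using y sub by (metis span_eq_iff)
  have "orthogonal z (M *v (M *v z))" using z by (simp add: span_base)
  hence "(M *v z) \<bullet> (M *v z) = 0" unfolding orthogonal_def by (simp add: inner_mat_sym[OF sM])
  hence Mz: "M *v z = 0" by simp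
  have "orthogonal z y" using z y by blast
  hence "y \<bullet> z = 0" by (simp add: orthogonal_def inner_commute)
  moreover have "c \<bullet> z = 0" using ker[OF Mz] .
  ultimately have "z \<bullet> z = 0" using c by (simp add: inner_add_left)
  hence "c = y" using c by simp
  thus ?thesis using yr by auto
qed

lemma mat_solve:
  fixes M :: "real^'k^'k" and R :: "real^'j^'k"
  assumes sM: "transpose M = M" and ker: "\<And>d. M *v d = 0 \<Longrightarrow> transpose R *v d = 0"
  shows "\<exists>Z. M ** Z = R"
proof -
  have "\<exists>z. M *v z = R *v axis j 1" for j
  proof (rule sym_solve[OF sM])
    fix d assume "M *v d = 0"
    hence "transpose R *v d = 0" by (rule ker)
    thus "(R *v axis j 1) \<bullet> d = 0" by (metis inner_transpose inner_zero_right)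
  qed
  then obtain z where z: "\<And>j. M *v z j = R *v axis j 1" by metis
  define Z where "Z = (\<chi> i j. z j $ i)"
  have "(M ** Z) $ i $ j = R $ i $ j" for i j
  proof -
    have "(M ** Z) $ i $ j = (M *v z j) $ i"
      by (simp add: Z_def matrix_matrix_mult_def matrix_vector_mult_def)
    thus ?thesis by (simp add: z mv_axis)
  qed
  thus ?thesis by (auto simp: vec_eq_iff)
qed

lemma psd_cs:
  fixes G :: "real^'k^'k"
  assumes sG: "transpose G = G" and ps: "\<And>v. 0 \<le> v \<bullet> (G *v v)"
  shows "(x \<bullet> (G *v y))\<^sup>2 \<le> (x \<bullet> (G *v x)) * (y \<bullet> (G *v y))"
proof -
  define a where "a = x \<bullet> (G *v x)"
  define b where "b = x \<bullet> (G *v y)"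
  define c where "c = y \<bullet> (G *v y)"
  have q: "0 \<le> a + 2 * t * b + t\<^sup>2 * c" for t
    using ps[of "x + t *\<^sub>R y"] unfolding quad_expand[OF sG] a_def b_def c_def .
  have c0: "0 \<le> c" using ps[of y] by (simp add: c_def)
  show ?thesis
  proof (cases "c = 0")
    case True
    have "b = 0"
    proof (rule ccontr)
      assume "b \<noteq> 0"
      hence "0 \<le> a + 2 * (- (a + 1) / (2 * b)) * b" using q[of "- (a + 1) / (2 * b)"] True by simp
      also have "\<dots> = -1" using \<open>b \<noteq> 0\<close> by (simp add: field_simps)
      finally show False by simp
    qed
    thus ?thesis using True by (simp add: a_def b_def c_def)
  next
    case False
    hence cp: "c > 0" using c0 by simp
    have "0 \<le> a + 2 * (- b / c) * b + (- b / c)\<^sup>2 * c" by (rule q)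
    also have "\<dots> = a - b\<^sup>2 / c" using cp by (simp add: field_simps power2_eq_square)
    finally have "b\<^sup>2 / c \<le> a" by simp
    hence "b\<^sup>2 \<le> a * c" using cp by (simp add: divide_le_eq)
    thus ?thesis by (simp add: a_def b_def c_def)
  qed
qed

lemma margin_generic:
  fixes Q G :: "real^'k^'k" and V :: "(real^'k) set" and p :: "real^'k \<Rightarrow> real^'j"
  assumes sQ: "transpose Q = Q" and subV: "subspace V"
    and QV: "\<And>k. k \<in> V \<Longrightarrow> Q *v k = 0"
    and GV: "\<And>k. k \<in> V \<Longrightarrow> G *v k = 0" and sG: "transpose G = G"
    and pV: "\<And>k. k \<in> V \<Longrightarrow> p k = 0"
    and plin: "linear p" and pn: "\<And>w. norm (p w) \<le> norm w"
    and pos: "\<And>w. 0 \<le> w \<bullet> (G *v w) \<Longrightarrow> w \<noteq> 0 \<Longrightarrow> (\<forall>k\<in>V. w \<bullet> k = 0) \<Longrightarrow> 0 < w \<bullet> (Q *v w)"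
  shows "\<exists>m>0. \<forall>w. 0 \<le> w \<bullet> (G *v w) \<longrightarrow> m * (norm (p w))\<^sup>2 \<le> w \<bullet> (Q *v w)"
proof -
  define q where "q w = w \<bullet> (Q *v w)" for w
  define g where "g w = w \<bullet> (G *v w)" for w
  have inv: "q (k + w) = q w \<and> g (k + w) = g w \<and> p (k + w) = p w" if "k \<in> V" for k w
  proof -
    have "k \<bullet> (Q *v w) = 0" using inner_mat_sym[OF sQ, of k w] QV[OF that] by simp
    moreover have "k \<bullet> (G *v w) = 0" using inner_mat_sym[OF sG, of k w] GV[OF that] by simp
    ultimately show ?thesis using QV[OF that] GV[OF that] pV[OF that] linear_add[OF plin]
      by (simp add: q_def g_def matrix_vector_right_distrib inner_add_left inner_add_right)
  qed
  have decomp: "\<exists>k w'. k \<in> V \<and> (\<forall>v\<in>V. w' \<bullet> v = 0) \<and> w = k + w'" for w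
  proof -
    obtain y z where "y \<in> span V" "\<And>v. v \<in> span V \<Longrightarrow> orthogonal z v" "w = y + z"
      using orthogonal_subspace_decomp_exists by blast
    thus ?thesis using subV by (metis span_eq_iff span_base orthogonal_def)
  qed
  have scale: "q (c *\<^sub>R w) = c\<^sup>2 * q w \<and> g (c *\<^sub>R w) = c\<^sup>2 * g w" for c w
    by (simp add: q_def g_def matrix_vector_mult_scaleR power2_eq_square)
  define Cs where "Cs = sphere 0 1 \<inter> (\<Inter>k\<in>V. {w. k \<bullet> w = 0}) \<inter> {w. 0 \<le> g w}"
  have cg: "continuous_on UNIV g" unfolding g_def by (intro continuous_intros)
  have cq: "continuous_on UNIV q" unfolding q_def by (intro continuous_intros)
  have compC: "compact Cs"
  proof -
    have "closed (\<Inter>k\<in>V. {w. k \<bullet> w = 0})" by (intro closed_INT ballI closed_hyperplane)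
    moreover have "closed {w. 0 \<le> g w}" using closed_Collect_le[OF continuous_on_const cg] by simp
    ultimately show ?thesis unfolding Cs_def
      by (metis compact_Int_closed compact_sphere Int_assoc closed_Int)
  qed
  obtain m where m: "m > 0" and mC: "\<And>w. w \<in> Cs \<Longrightarrow> m \<le> q w"
  proof (cases "Cs = {}")
    case True thus ?thesis using that[of 1] by auto
  next
    case False
    obtain wm where wm: "wm \<in> Cs" and wmin: "\<And>w. w \<in> Cs \<Longrightarrow> q wm \<le> q w"
      using continuous_attains_inf[OF compC False continuous_on_subset[OF cq]] by blast
    have "wm \<noteq> 0" using wm by (auto simp: Cs_def)
    hence "0 < q wm" using wm pos[of wm] unfolding Cs_def q_def g_def by (auto simp: inner_commute)
    thus ?thesis using that wmin by blast
  qed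
  have "\<forall>w. 0 \<le> g w \<longrightarrow> m * (norm (p w))\<^sup>2 \<le> q w"
  proof (intro allI impI)
    fix w assume gw: "0 \<le> g w"
    obtain k w' where k: "k \<in> V" and w': "\<forall>v\<in>V. w' \<bullet> v = 0" and wd: "w = k + w'" using decomp by blast
    have e: "q w = q w'" "g w = g w'" "p w = p w'" using inv[OF k, of w'] wd by auto
    show "m * (norm (p w))\<^sup>2 \<le> q w"
    proof (cases "w' = 0")
      case True
      thus ?thesis using e linear_0[OF plin] by (simp add: q_def)
    next
      case False
      define v where "v = (1 / norm w') *\<^sub>R w'"
      have nv: "norm v = 1" using False by (simp add: v_def)
      have sv: "q v = q w' / (norm w')\<^sup>2" "g v = g w' / (norm w')\<^sup>2"
        using scale[of "1 / norm w'" w'] by (simp_all add: v_def power_divide)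
      have "v \<in> Cs" unfolding Cs_def using nv w' gw e sv
        by (auto simp: v_def inner_commute)
      hence "m \<le> q w' / (norm w')\<^sup>2" using mC[of v] sv(1) by simp
      hence "m * (norm w')\<^sup>2 \<le> q w'" using False by (simp add: field_simps)
      moreover have "(norm (p w'))\<^sup>2 \<le> (norm w')\<^sup>2" using pn[of w'] by (simp add: power_mono)
      ultimately have "m * (norm (p w'))\<^sup>2 \<le> q w'" using m
        by (meson mult_left_mono less_imp_le order_trans)
      thus ?thesis using e by simp
    qed
  qed
  thus ?thesis using m unfolding q_def g_def by blast
qed

lemma transpose_mat1_scale: "transpose (Y - b *\<^sub>R mat 1) = transpose Y - b *\<^sub>R (mat 1 :: real^'n^'n)"
  by (simp add: transpose_diff transpose_scalar)

lemma LMI_sym: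
  assumes "transpose Y = Y"
  shows "transpose (LMI_block Y L C D \<beta>) = LMI_block Y L C D \<beta>"
  using assms unfolding LMI_block_def Let_def
  by (simp add: transpose_vcat transpose_hcat hcat_vcat transpose_mat1_scale)

locale nec =
  fixes Phi11 :: "real^'n^'n" and Phi12 :: "real^'T^'n" and Phi22 :: "real^'T^'T"
    and Xp Xm :: "real^'T^'n" and Um :: "real^'T^'m"
    and C :: "real^'n^'p" and D :: "real^'m^'p"
    and P :: "real^'n^'n" and K :: "real^'n^'m"
    and A0 :: "real^'n^'n" and B0 :: "real^'m^'n" and W0 :: "real^'T^'n"
  assumes Phi11_sym: "transpose Phi11 = Phi11"
    and Phi22_sym: "transpose Phi22 = Phi22"
    and Phi22_neg: "pd (- Phi22)"
    and pdP: "pd P"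
    and inf: "\<And>A B. (A, B) \<in> Sigma_set Phi11 Phi12 Phi22 Xp Xm Um \<Longrightarrow>
          pd (P - transpose (A + B ** K) ** P ** (A + B ** K) - transpose (C + D ** K) ** (C + D ** K))"
    and data: "Xp = A0 ** Xm + B0 ** Um + W0" "noise_ok Phi11 Phi12 Phi22 W0"
begin

lemma Psym: "transpose P = P" using pdP by (simp add: pd_def)
lemma Ppsd: "0 \<le> x \<bullet> (P *v x)" using pdP unfolding pd_def by (cases "x = 0") (auto intro: less_imp_le)

lemma inf_form:
  assumes "(A, B) \<in> Sigma_set Phi11 Phi12 Phi22 Xp Xm Um" "\<xi> \<noteq> 0"
  shows "((A + B ** K) *v \<xi>) \<bullet> (P *v ((A + B ** K) *v \<xi>)) + ((C + D ** K) *v \<xi>) \<bullet> ((C + D ** K) *v \<xi>) < \<xi> \<bullet> (P *v \<xi>)"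
  using inf[OF assms(1)] assms(2) unfolding pd_def form_Q by auto

lemma data_in: "(A0, B0) \<in> Sigma_set Phi11 Phi12 Phi22 Xp Xm Um"
  using data by (auto simp: Sigma_set_def)

lemma PC_pos: "\<xi> \<noteq> 0 \<Longrightarrow> ((C + D ** K) *v \<xi>) \<bullet> ((C + D ** K) *v \<xi>) < \<xi> \<bullet> (P *v \<xi>)"
  using inf_form[OF data_in, of \<xi>] Ppsd[of "(A0 + B0 ** K) *v \<xi>"] by linarith

lemma neg22: "s \<noteq> 0 \<Longrightarrow> s \<bullet> (Phi22 *v s) < 0"
  using Phi22_neg unfolding pd_def by (simp add: uminus_mult_vec)

lemma ker_lemma:
  assumes S0: "transpose Xm *v u1 + transpose Um *v u2 = 0"
  shows "u1 + transpose K *v u2 = 0"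
proof (rule ccontr)
  define v where "v = u1 + transpose K *v u2"
  assume "u1 + transpose K *v u2 \<noteq> 0"
  hence vnz: "v \<noteq> 0" by (simp add: v_def)
  hence vv: "v \<bullet> v > 0" by simp
  define c where "c = (1 / (v \<bullet> v)) *\<^sub>R v"
  define a where "a = (A0 + B0 ** K) *v v"
  have key: "a \<bullet> (P *v a) < 0"
  proof -
    have lt: "(a + s *\<^sub>R v) \<bullet> (P *v (a + s *\<^sub>R v)) < v \<bullet> (P *v v)" if s: "s = 1 \<or> s = -1" for s
    proof -
      define A where "A = A0 + s *\<^sub>R outer c u1"
      define B where "B = B0 + s *\<^sub>R outer c u2"
      have "A ** Xm + B ** Um + W0 = Xp"
      proof -
        have "outer c u1 ** Xm + outer c u2 ** Um = 0"
          by (simp add: outer_mmult outer_add2 S0)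
        hence "s *\<^sub>R (outer c u1 ** Xm) + s *\<^sub>R (outer c u2 ** Um) = 0"
          by (metis scaleR_right_distrib scaleR_zero_right)
        thus ?thesis using data(1) unfolding A_def B_def
          by (simp add: matrix_add_rdistrib' scalar_matrix_assoc algebra_simps)
      qed
      hence AB: "(A, B) \<in> Sigma_set Phi11 Phi12 Phi22 Xp Xm Um"
        using data(2) by (auto simp: Sigma_set_def intro!: exI[of _ W0])
      have eqv: "(A + B ** K) *v v = a + s *\<^sub>R v"
      proof -
        have t: "(transpose K *v u2) \<bullet> v = u2 \<bullet> (K *v v)"
          by (metis inner_commute inner_transpose)
        have "u1 \<bullet> v + u2 \<bullet> (K *v v) = v \<bullet> v"
          by (simp only: t[symmetric]) (simp add: v_def inner_add_left)
        hence "(u1 \<bullet> v) *\<^sub>R c + (u2 \<bullet> (K *v v)) *\<^sub>R c = v"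
          using vv unfolding c_def scaleR_add_left[symmetric] scaleR_scaleR by (simp add: add_divide_distrib[symmetric])
        hence "(s * (u1 \<bullet> v)) *\<^sub>R c + (s * (u2 \<bullet> (K *v v))) *\<^sub>R c = s *\<^sub>R v"
          by (metis scaleR_add_right scaleR_scaleR)
        thus ?thesis unfolding A_def B_def a_def
          by (simp add: matrix_vector_mult_add_rdistrib matrix_add_rdistrib' mvmult_assoc scaleR_mult_vec
              outer_mult algebra_simps scaleR_add_right[symmetric])
      qed
      show ?thesis using inf_form[OF AB vnz] inner_ge_zero[of "(C + D ** K) *v v"] unfolding eqv by linarith
    qed
    have "(a + 1 *\<^sub>R v) \<bullet> (P *v (a + 1 *\<^sub>R v)) + (a + (-1) *\<^sub>R v) \<bullet> (P *v (a + (-1) *\<^sub>R v))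
        = 2 * (a \<bullet> (P *v a)) + 2 * (v \<bullet> (P *v v))"
      by (simp add: matrix_vector_right_distrib matrix_vector_mult_minus_right inner_add_left inner_add_right
          inner_minus_left inner_minus_right algebra_simps)
    thus ?thesis using lt[of 1] lt[of "-1"] by simp
  qed
  thus False using Ppsd[of a] by simp
qed

abbreviation "Phi \<equiv> Phi_mat Phi11 Phi12 Phi22"
definition "Smat = vcat Xm Um"
definition "Sv u = transpose Smat *v u"
definition "hv x u = vjoin x (transpose Xp *v x - Sv u)"
definition "phq h = h \<bullet> (Phi *v h)"

lemma Phisym: "transpose Phi = Phi" by (rule Phi_sym[OF Phi11_sym Phi22_sym])

lemma Sv_join: "Sv (vjoin u1 u2) = transpose Xm *v u1 + transpose Um *v u2"
  by (simp add: Sv_def Smat_def transpose_vcat hcat_mult)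

lemma Sv_add: "Sv (u + e) = Sv u + Sv e" by (simp add: Sv_def matrix_vector_right_distrib)
lemma Sv_scale: "Sv (c *\<^sub>R e) = c *\<^sub>R Sv e" by (simp add: Sv_def matrix_vector_mult_scaleR)

lemma hv_add: "hv x (u + e) = hv x u + vjoin 0 (- Sv e)"
  by (simp add: hv_def Sv_add vjoin_add algebra_simps)

lemma phq_add: "phq (a + b) = phq a + 2 * (a \<bullet> (Phi *v b)) + phq b"
  using inner_mat_sym[OF Phisym, of b a]
  by (simp add: phq_def matrix_vector_right_distrib inner_add_left inner_add_right)

lemma phq_0s: "phq (vjoin 0 s) = s \<bullet> (Phi22 *v s)"
  by (simp add: phq_def Phi_mult)

lemma phq_0s_le: "phq (vjoin 0 s) \<le> 0"
proof -
  have "s \<bullet> (Phi22 *v s) \<le> 0" using neg22[of s] by (cases "s = 0") auto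
  thus ?thesis by (simp only: phq_0s)
qed

lemma center_exists: "\<exists>Zc :: real^'n^('n+'m). \<forall>\<xi> b. hv \<xi> (Zc *v \<xi>) \<bullet> (Phi *v vjoin 0 (Sv b)) = 0"
proof -
  define Cst where "Cst = transpose Phi12 + Phi22 ** transpose Xp"
  define M where "M = Smat ** Phi22 ** transpose Smat"
  have sM: "transpose M = M" by (simp add: M_def matrix_transpose_mul Phi22_sym matrix_mul_assoc)
  have ker: "transpose (Smat ** Cst) *v d = 0" if "M *v d = 0" for d
  proof -
    have "(transpose Smat *v d) \<bullet> (Phi22 *v (transpose Smat *v d)) = 0"
      using that quad_sandwich[of d "transpose Smat" Phi22] by (simp add: M_def)
    hence "transpose Smat *v d = 0" using neg22 by fastforce
    thus ?thesis by (simp add: matrix_transpose_mul mvmult_assoc)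
  qed
  obtain Zc where Zc: "M ** Zc = Smat ** Cst" using mat_solve[OF sM ker] by blast
  define Mc where "Mc = Cst - Phi22 ** transpose Smat ** Zc"
  have SMc: "Smat ** Mc = 0"
    using Zc by (simp add: Mc_def M_def matrix_add_ldistrib matrix_mul_assoc algebra_simps
        matrix_sub_ldistrib)
  have "hv \<xi> (Zc *v \<xi>) \<bullet> (Phi *v vjoin 0 (Sv b)) = 0" for \<xi> b
  proof -
    define s where "s = Sv b"
    define \<zeta> where "\<zeta> = Zc *v \<xi>"
    have e0: "Phi *v vjoin 0 s = vjoin (Phi12 *v s) (Phi22 *v s)" by (simp add: Phi_mult)
    have "hv \<xi> (Zc *v \<xi>) \<bullet> (Phi *v vjoin 0 (Sv b)) = \<xi> \<bullet> (Phi12 *v s) + (transpose Xp *v \<xi>) \<bullet> (Phi22 *v s) - (transpose Smat *v \<zeta>) \<bullet> (Phi22 *v s)"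
      unfolding hv_def s_def[symmetric] e0 \<zeta>_def[symmetric] by (simp add: Sv_def inner_diff_left)
    also have "\<dots> = s \<bullet> (transpose Phi12 *v \<xi>) + s \<bullet> (Phi22 *v (transpose Xp *v \<xi>)) - s \<bullet> (Phi22 *v (transpose Smat *v \<zeta>))"
      using inner_transpose[of s Phi12 \<xi>] inner_mat_sym[OF Phi22_sym, of "transpose Xp *v \<xi>" s]
        inner_mat_sym[OF Phi22_sym, of "transpose Smat *v \<zeta>" s] by (simp add: inner_commute)
    also have "\<dots> = (Sv b) \<bullet> (Mc *v \<xi>)"
      by (simp add: s_def \<zeta>_def Mc_def Cst_def matrix_vector_mult_diff_rdistrib matrix_vector_mult_add_rdistrib
          mvmult_assoc inner_diff_right inner_add_right)
    also have "\<dots> = b \<bullet> ((Smat ** Mc) *v \<xi>)"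
      by (simp add: Sv_def inner_transpose mvmult_assoc inner_commute)
    finally show ?thesis by (simp add: SMc)
  qed
  thus ?thesis by blast
qed

lemma phq_scale: "phq (c *\<^sub>R h) = c\<^sup>2 * phq h"
  by (simp add: phq_def scaleR_mult_vec matrix_vector_mult_scaleR power2_eq_square)

lemma Gc_decomp:
  assumes Zc: "\<forall>\<xi> b. hv \<xi> (Zc *v \<xi>) \<bullet> (Phi *v vjoin 0 (Sv b)) = 0"
  shows "phq (hv \<xi> (Zc *v \<xi> + e)) = phq (hv \<xi> (Zc *v \<xi>)) + phq (vjoin 0 (- Sv e))"
proof -
  have "hv \<xi> (Zc *v \<xi>) \<bullet> (Phi *v vjoin 0 (- Sv e)) = 0"
  proof -
    have eqm: "vjoin 0 (- Sv e) = - vjoin 0 (Sv e)" by (simp add: vjoin_minus)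
    show ?thesis unfolding eqm matrix_vector_mult_minus_right inner_minus_right using Zc[rule_format, of \<xi> e] by simp
  qed
  thus ?thesis by (simp add: hv_add phq_add)
qed

lemma lift:
  assumes xnz: "x \<noteq> 0" and hx: "0 \<le> phq (hv x u)"
  shows "\<exists>Z::real^'n^('n+'m). Z *v x = u \<and> (\<forall>\<xi>. 0 \<le> phq (hv \<xi> (Z *v \<xi>)))"
proof -
  obtain Zc :: "real^'n^('n+'m)" where Zc: "\<forall>\<xi> b. hv \<xi> (Zc *v \<xi>) \<bullet> (Phi *v vjoin 0 (Sv b)) = 0"
    using center_exists by blast
  note dec = Gc_decomp[OF Zc]
  define Hc where "Hc = vcat (mat 1) (transpose Xp - transpose Smat ** Zc)"
  define Gm where "Gm = transpose Hc ** Phi ** Hc"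
  have Hc: "Hc *v \<xi> = hv \<xi> (Zc *v \<xi>)" for \<xi>
    by (simp add: Hc_def hv_def vcat_mult Sv_def matrix_vector_mult_diff_rdistrib mvmult_assoc)
  have Gm: "\<xi> \<bullet> (Gm *v \<xi>) = phq (hv \<xi> (Zc *v \<xi>))" for \<xi>
    by (simp add: Gm_def quad_sandwich Hc phq_def)
  have sGm: "transpose Gm = Gm" by (simp add: Gm_def matrix_transpose_mul Phisym matrix_mul_assoc)
  have Gnn: "0 \<le> \<xi> \<bullet> (Gm *v \<xi>)" for \<xi>
  proof -
    define u0 where "u0 = vjoin (transpose A0 *v \<xi>) (transpose B0 *v \<xi>)"
    have "transpose Xp *v \<xi> = transpose Xm *v (transpose A0 *v \<xi>) + transpose Um *v (transpose B0 *v \<xi>) + transpose W0 *v \<xi>"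
      by (subst data(1)) (simp add: transpose_add matrix_transpose_mul matrix_vector_mult_add_rdistrib mvmult_assoc)
    hence "hv \<xi> u0 = vjoin \<xi> (transpose W0 *v \<xi>)"
      by (simp add: hv_def u0_def Sv_join)
    hence "0 \<le> phq (hv \<xi> u0)" using noise_form[OF data(2)] by (simp add: phq_def)
    moreover have "phq (hv \<xi> u0) = phq (hv \<xi> (Zc *v \<xi>)) + phq (vjoin 0 (- Sv (u0 - Zc *v \<xi>)))"
      using dec[of \<xi> "u0 - Zc *v \<xi>"] by simp
    ultimately show ?thesis using phq_0s_le[of "- Sv (u0 - Zc *v \<xi>)"] Gm[of \<xi>] by linarith
  qed
  define e where "e = u - Zc *v x"
  define \<nu> where "\<nu> = phq (vjoin 0 (- Sv e))"
  define gx where "gx = x \<bullet> (Gm *v x)"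
  have nu0: "\<nu> \<le> 0" by (simp add: \<nu>_def phq_0s_le)
  have hyp: "0 \<le> gx + \<nu>" using hx dec[of x e] Gm[of x] by (simp add: e_def \<nu>_def gx_def)
  define a where "a = (if gx > 0 then (1 / gx) *\<^sub>R (Gm *v x) else (1 / (x \<bullet> x)) *\<^sub>R x)"
  have ax: "a \<bullet> x = 1"
    using xnz by (auto simp: a_def gx_def inner_commute)
  define Z where "Z = Zc + outer e a"
  have Zxi: "Z *v \<xi> = Zc *v \<xi> + (a \<bullet> \<xi>) *\<^sub>R e" for \<xi>
    by (simp add: Z_def matrix_vector_mult_add_rdistrib outer_mult)
  have "Z *v x = u" by (simp add: Zxi ax e_def)
  moreover have "0 \<le> phq (hv \<xi> (Z *v \<xi>))" for \<xi>
  proof -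
    have eq: "phq (hv \<xi> (Z *v \<xi>)) = \<xi> \<bullet> (Gm *v \<xi>) + (a \<bullet> \<xi>)\<^sup>2 * \<nu>"
    proof -
      have sc: "vjoin 0 (- Sv ((a \<bullet> \<xi>) *\<^sub>R e)) = (a \<bullet> \<xi>) *\<^sub>R vjoin 0 (- Sv e)"
        by (simp add: Sv_scale vjoin_scale)
      have "phq (vjoin 0 (- Sv ((a \<bullet> \<xi>) *\<^sub>R e))) = (a \<bullet> \<xi>)\<^sup>2 * \<nu>"
        unfolding \<nu>_def sc by (rule phq_scale)
      thus ?thesis by (simp add: Zxi dec Gm[symmetric])
    qed
    show ?thesis
    proof (cases "gx > 0")
      case True
      have aa: "a \<bullet> \<xi> = (\<xi> \<bullet> (Gm *v x)) / gx"
        using True inner_mat_sym[OF sGm, of x \<xi>] by (simp add: a_def inner_commute)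
      have cs: "(\<xi> \<bullet> (Gm *v x))\<^sup>2 \<le> (\<xi> \<bullet> (Gm *v \<xi>)) * gx"
        unfolding gx_def by (rule psd_cs[OF sGm Gnn])
      have "(a \<bullet> \<xi>)\<^sup>2 * gx \<le> \<xi> \<bullet> (Gm *v \<xi>)"
        using cs True unfolding aa by (simp add: power_divide field_simps power2_eq_square)
      moreover have "(a \<bullet> \<xi>)\<^sup>2 * (- gx) \<le> (a \<bullet> \<xi>)\<^sup>2 * \<nu>"
        using hyp by (intro mult_left_mono) auto
      ultimately show ?thesis unfolding eq by simp
    next
      case False
      hence "gx = 0" using Gnn[of x] by (simp add: gx_def)
      hence "\<nu> = 0" using hyp nu0 by simp
      thus ?thesis unfolding eq using Gnn[of \<xi>] by simp
    qed
  qed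
  ultimately show ?thesis by blast
qed

lemma lift_AB:
  assumes xnz: "x \<noteq> 0" and hx: "0 \<le> phq (hv x (vjoin u1 u2))"
  shows "\<exists>A B. (A, B) \<in> Sigma_set Phi11 Phi12 Phi22 Xp Xm Um \<and> transpose A *v x = u1 \<and> transpose B *v x = u2"
proof -
  obtain Z :: "real^'n^('n+'m)" where Zx: "Z *v x = vjoin u1 u2" and Zf: "\<And>\<xi>. 0 \<le> phq (hv \<xi> (Z *v \<xi>))"
    using lift[OF xnz hx] by blast
  define Zu :: "real^'n^'n" where "Zu = (\<chi> i j. Z $ Inl i $ j)"
  define Zl :: "real^'n^'m" where "Zl = (\<chi> i j. Z $ Inr i $ j)"
  have Zsplit: "Z *v \<xi> = vjoin (Zu *v \<xi>) (Zl *v \<xi>)" for \<xi>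
    by (simp add: vec_eq_iff Zu_def Zl_def matrix_vector_mult_def vjoin_def split: sum.split)
  define A where "A = transpose Zu"
  define B where "B = transpose Zl"
  define W where "W = Xp - A ** Xm - B ** Um"
  have "noise_ok Phi11 Phi12 Phi22 W"
    unfolding noise_ok_def psd_def
  proof (intro conjI allI)
    show "transpose (transpose (vcat (mat 1) (transpose W)) ** Phi ** vcat (mat 1) (transpose W)) =
      transpose (vcat (mat 1) (transpose W)) ** Phi ** vcat (mat 1) (transpose W)"
      by (simp add: matrix_transpose_mul Phisym matrix_mul_assoc)
    fix \<xi> :: "real^'n"
    have "transpose W *v \<xi> = transpose Xp *v \<xi> - Sv (Z *v \<xi>)"
      by (simp add: W_def A_def B_def Zsplit Sv_join transpose_diff matrix_transpose_mul
          matrix_vector_mult_diff_rdistrib mvmult_assoc)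
    hence "vcat (mat 1) (transpose W) *v \<xi> = hv \<xi> (Z *v \<xi>)" by (simp add: vcat_mult hv_def)
    thus "0 \<le> \<xi> \<bullet> ((transpose (vcat (mat 1) (transpose W)) ** Phi ** vcat (mat 1) (transpose W)) *v \<xi>)"
      using Zf[of \<xi>] by (simp add: quad_sandwich phq_def)
  qed
  hence "(A, B) \<in> Sigma_set Phi11 Phi12 Phi22 Xp Xm Um"
    by (auto simp: Sigma_set_def W_def intro!: exI[of _ W])
  moreover have "transpose A *v x = u1" "transpose B *v x = u2"
    using Zx by (simp_all add: A_def B_def Zsplit)
  ultimately show ?thesis by blast
qed

definition "Yi = matrix_inv P"
definition "Li = K ** Yi"
lemmas invP = pd_inv[OF pdP, folded Yi_def]

abbreviation M5n :: "real^('n+'T)^('n + ('n + ('m + ('n + 'p))))" where "M5n \<equiv> M5 Xp Xm Um"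
definition "G5 = M5n ** Phi ** transpose M5n"
definition "LM0 = LMI_block Yi Li C D 0"

lemma G5_sym: "transpose G5 = G5"
  by (simp add: G5_def matrix_transpose_mul Phisym matrix_mul_assoc)

lemma LM0_sym: "transpose LM0 = LM0"
  unfolding LM0_def by (rule LMI_sym[OF invP(3)])

lemma g5_form: "vjoin x (vjoin u1 (vjoin u2 (vjoin y z))) \<bullet> (G5 *v vjoin x (vjoin u1 (vjoin u2 (vjoin y z))))
   = phq (hv x (vjoin u1 u2))"
  by (simp add: G5_def form_G5 M5T_mult hv_def Sv_join phq_def algebra_simps)

lemma q_form: "vjoin x (vjoin u1 (vjoin u2 (vjoin y z))) \<bullet> (LM0 *v vjoin x (vjoin u1 (vjoin u2 (vjoin y z))))
   = x \<bullet> (Yi *v x) + 2 * (u1 \<bullet> (Yi *v y)) + 2 * (u2 \<bullet> (Li *v y)) + y \<bullet> (Yi *v y)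
      + 2 * (z \<bullet> ((C ** Yi + D ** Li) *v y)) + z \<bullet> z"
  unfolding LM0_def LMI_form[OF invP(3)] by simp

lemma q_ident:
  fixes A :: "real^'n^'n" and B :: "real^'m^'n" and x y :: "real^'n" and z :: "real^'p"
  defines "\<eta> \<equiv> Yi *v x" and "\<xi> \<equiv> Yi *v y"
  defines "a \<equiv> (A + B ** K) *v \<xi>" and "c \<equiv> (C + D ** K) *v \<xi>"
  shows "x \<bullet> (Yi *v x) + 2 * ((transpose A *v x) \<bullet> (Yi *v y)) + 2 * ((transpose B *v x) \<bullet> (Li *v y)) + y \<bullet> (Yi *v y)
      + 2 * (z \<bullet> ((C ** Yi + D ** Li) *v y)) + z \<bullet> z
    = (\<eta> + a) \<bullet> (P *v (\<eta> + a)) + (\<xi> \<bullet> (P *v \<xi>) - a \<bullet> (P *v a) - c \<bullet> c) + (z + c) \<bullet> (z + c)"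
proof -
  have x: "x = P *v \<eta>" by (simp add: \<eta>_def invP(5))
  have y: "y = P *v \<xi>" by (simp add: \<xi>_def invP(5))
  have l: "Li *v y = K *v \<xi>" by (simp add: Li_def \<xi>_def mvmult_assoc)
  have cy: "(C ** Yi + D ** Li) *v y = c"
    by (simp add: c_def \<xi>_def Li_def matrix_vector_mult_add_rdistrib mvmult_assoc)
  have t1: "(transpose A *v x) \<bullet> \<xi> + (transpose B *v x) \<bullet> (K *v \<xi>) = (P *v \<eta>) \<bullet> a"
    unfolding a_def by (simp add: x[symmetric] inner_transpose inner_commute matrix_vector_mult_add_rdistrib mvmult_assoc inner_add_right)
  have t2: "x \<bullet> (Yi *v x) = (P *v \<eta>) \<bullet> \<eta>" by (simp add: \<eta>_def invP(5))
  have t3: "y \<bullet> (Yi *v y) = \<xi> \<bullet> (P *v \<xi>)" by (simp add: \<xi>_def invP(5) inner_commute)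
  have s1: "a \<bullet> (P *v \<eta>) = (P *v \<eta>) \<bullet> a" by (simp add: inner_commute)
  have s2: "\<eta> \<bullet> (P *v a) = (P *v \<eta>) \<bullet> a" using inner_mat_sym[OF Psym, of \<eta> a] by (simp add: inner_commute)
  have s3: "\<eta> \<bullet> (P *v \<eta>) = (P *v \<eta>) \<bullet> \<eta>" by (simp add: inner_commute)
  have lhs: "x \<bullet> (Yi *v x) + 2 * ((transpose A *v x) \<bullet> (Yi *v y)) + 2 * ((transpose B *v x) \<bullet> (Li *v y)) + y \<bullet> (Yi *v y)
      + 2 * (z \<bullet> ((C ** Yi + D ** Li) *v y)) + z \<bullet> z
    = (P *v \<eta>) \<bullet> \<eta> + 2 * ((P *v \<eta>) \<bullet> a) + \<xi> \<bullet> (P *v \<xi>) + 2 * (z \<bullet> c) + z \<bullet> z"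
    using t1 t2 t3 l cy by (simp add: \<xi>_def[symmetric] algebra_simps)
  show ?thesis unfolding lhs
    by (simp add: matrix_vector_right_distrib inner_add_left inner_add_right s1 s2 s3 algebra_simps inner_commute[of c z])
qed

lemma stepA_pos:
  assumes xnz: "x \<noteq> 0" and hx: "0 \<le> phq (hv x (vjoin u1 u2))"
  shows "0 < vjoin x (vjoin u1 (vjoin u2 (vjoin y z))) \<bullet> (LM0 *v vjoin x (vjoin u1 (vjoin u2 (vjoin y z))))"
proof -
  obtain A B where AB: "(A, B) \<in> Sigma_set Phi11 Phi12 Phi22 Xp Xm Um" and u1: "transpose A *v x = u1"
    and u2: "transpose B *v x = u2" using lift_AB[OF xnz hx] by blast
  define \<eta> where "\<eta> = Yi *v x"
  define \<xi> where "\<xi> = Yi *v y"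
  define a where "a = (A + B ** K) *v \<xi>"
  define c where "c = (C + D ** K) *v \<xi>"
  have eq: "vjoin x (vjoin u1 (vjoin u2 (vjoin y z))) \<bullet> (LM0 *v vjoin x (vjoin u1 (vjoin u2 (vjoin y z))))
    = (\<eta> + a) \<bullet> (P *v (\<eta> + a)) + (\<xi> \<bullet> (P *v \<xi>) - a \<bullet> (P *v a) - c \<bullet> c) + (z + c) \<bullet> (z + c)"
    unfolding q_form u1[symmetric] u2[symmetric] q_ident \<eta>_def \<xi>_def a_def c_def ..
  show ?thesis
  proof (cases "\<xi> = 0")
    case False
    have "0 < \<xi> \<bullet> (P *v \<xi>) - a \<bullet> (P *v a) - c \<bullet> c" using inf_form[OF AB False] unfolding a_def c_def by linarith
    thus ?thesis unfolding eq using Ppsd[of "\<eta> + a"] inner_ge_zero[of "z + c"] by linarith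
  next
    case True
    hence a0: "a = 0" "c = 0" by (simp_all add: a_def c_def)
    have "\<eta> \<noteq> 0" using xnz invP(5)[of x] by (auto simp: \<eta>_def)
    hence "0 < \<eta> \<bullet> (P *v \<eta>)" using pdP by (simp add: pd_def)
    thus ?thesis unfolding eq a0 True using inner_ge_zero[of z] by (simp add: add_pos_nonneg)
  qed
qed

lemma stepA_zero:
  fixes y :: "real^'n" and z :: "real^'p" and u1 :: "real^'n" and u2 :: "real^'m"
  assumes h0: "0 \<le> phq (hv 0 (vjoin u1 u2))"
  defines "\<xi> \<equiv> Yi *v y"
  defines "c \<equiv> (C + D ** K) *v \<xi>"
  shows "Sv (vjoin u1 u2) = 0" "u1 + transpose K *v u2 = 0"
    "vjoin 0 (vjoin u1 (vjoin u2 (vjoin y z))) \<bullet> (LM0 *v vjoin 0 (vjoin u1 (vjoin u2 (vjoin y z))))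
      = (\<xi> \<bullet> (P *v \<xi>) - c \<bullet> c) + (z + c) \<bullet> (z + c)"
proof -
  have "hv 0 (vjoin u1 u2) = vjoin 0 (- Sv (vjoin u1 u2))" by (simp add: hv_def)
  hence "0 \<le> (- Sv (vjoin u1 u2)) \<bullet> (Phi22 *v (- Sv (vjoin u1 u2)))" using h0 by (simp add: phq_0s)
  hence "- Sv (vjoin u1 u2) = 0" using neg22 by fastforce
  thus S0: "Sv (vjoin u1 u2) = 0" by simp
  show K0: "u1 + transpose K *v u2 = 0" by (rule ker_lemma) (use S0 in \<open>simp add: Sv_join\<close>)
  have y: "y = P *v \<xi>" by (simp add: \<xi>_def invP(5))
  have l: "Li *v y = K *v \<xi>" by (simp add: Li_def \<xi>_def mvmult_assoc)
  have cy: "(C ** Yi + D ** Li) *v y = c"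
    by (simp add: c_def \<xi>_def Li_def matrix_vector_mult_add_rdistrib mvmult_assoc)
  have t3: "y \<bullet> (Yi *v y) = \<xi> \<bullet> (P *v \<xi>)" by (simp add: \<xi>_def invP(5) inner_commute)
  have t1: "u1 \<bullet> \<xi> + u2 \<bullet> (K *v \<xi>) = 0"
  proof -
    have "u2 \<bullet> (K *v \<xi>) = (transpose K *v u2) \<bullet> \<xi>" by (metis inner_commute inner_transpose)
    hence "u1 \<bullet> \<xi> + u2 \<bullet> (K *v \<xi>) = (u1 + transpose K *v u2) \<bullet> \<xi>" by (simp add: inner_add_left)
    thus ?thesis using K0 by simp
  qed
  have "vjoin 0 (vjoin u1 (vjoin u2 (vjoin y z))) \<bullet> (LM0 *v vjoin 0 (vjoin u1 (vjoin u2 (vjoin y z))))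
      = 2 * (u1 \<bullet> \<xi> + u2 \<bullet> (K *v \<xi>)) + \<xi> \<bullet> (P *v \<xi>) + 2 * (z \<bullet> c) + z \<bullet> z"
    unfolding q_form l cy t3 by (simp add: \<xi>_def algebra_simps)
  also have "\<dots> = (\<xi> \<bullet> (P *v \<xi>) - c \<bullet> c) + (z + c) \<bullet> (z + c)"
    unfolding t1 by (simp add: inner_add_left inner_add_right inner_commute[of c z] algebra_simps)
  finally show "vjoin 0 (vjoin u1 (vjoin u2 (vjoin y z))) \<bullet> (LM0 *v vjoin 0 (vjoin u1 (vjoin u2 (vjoin y z))))
      = (\<xi> \<bullet> (P *v \<xi>) - c \<bullet> c) + (z + c) \<bullet> (z + c)" .
qed

lemma w_decomp: "(w::real^('a::finite + ('b::finite + ('c::finite + ('d::finite + 'e::finite))))) =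
   vjoin (vl w) (vjoin (vl (vr w)) (vjoin (vl (vr (vr w))) (vjoin (vl (vr (vr (vr w)))) (vr (vr (vr (vr w)))))))"
  by (metis vjoin_vl_vr)

definition "Vk = {k. LM0 *v k = 0 \<and> transpose M5n *v k = 0}"

lemma Vk_sub: "subspace Vk"
  unfolding subspace_def Vk_def
  by (simp add: matrix_vector_right_distrib matrix_vector_mult_scaleR)

lemma vl_M5: "vl (transpose M5n *v w) = vl w"
proof -
  obtain x u1 u2 y z where "w = vjoin x (vjoin u1 (vjoin u2 (vjoin y z)))" using w_decomp by blast
  thus ?thesis by (simp add: M5T_mult)
qed

lemma norm_vl: "norm (vl w) \<le> norm w"
proof -
  have "(norm w)\<^sup>2 = (norm (vl w))\<^sup>2 + (norm (vr w))\<^sup>2"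
    using norm_vjoin_sq[of "vl w" "vr w"] unfolding vjoin_vl_vr .
  hence "(norm (vl w))\<^sup>2 \<le> (norm w)\<^sup>2" by simp
  thus ?thesis by (rule power2_le_imp_le) simp
qed

lemma pos_all:
  assumes g: "0 \<le> w \<bullet> (G5 *v w)" and wnz: "w \<noteq> 0" and orth: "\<forall>k\<in>Vk. w \<bullet> k = 0"
  shows "0 < w \<bullet> (LM0 *v w)"
proof -
  obtain x u1 u2 y z where wd: "w = vjoin x (vjoin u1 (vjoin u2 (vjoin y z)))"
    using w_decomp by blast
  have hx: "0 \<le> phq (hv x (vjoin u1 u2))" using g unfolding wd g5_form .
  show ?thesis
  proof (cases "x = 0")
    case False thus ?thesis unfolding wd using stepA_pos[OF False hx] by blast
  next
    case True
    note z0 = stepA_zero[OF hx[unfolded True]]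
    define \<xi> where "\<xi> = Yi *v y"
    define c where "c = (C + D ** K) *v \<xi>"
    have qe: "w \<bullet> (LM0 *v w) = (\<xi> \<bullet> (P *v \<xi>) - c \<bullet> c) + (z + c) \<bullet> (z + c)"
      unfolding wd True z0(3) \<xi>_def c_def ..
    show ?thesis
    proof (cases "\<xi> = 0")
      case False
      hence "0 < \<xi> \<bullet> (P *v \<xi>) - c \<bullet> c" using PC_pos[of \<xi>] by (simp add: c_def)
      thus ?thesis unfolding qe using inner_ge_zero[of "z + c"] by linarith
    next
      case xi0: True
      hence c0: "c = 0" by (simp add: c_def)
      have y0: "y = 0" using invP(5)[of y] xi0 by (simp add: \<xi>_def)
      show ?thesis
      proof (cases "z = 0")
        case False
        thus ?thesis unfolding qe xi0 c0 by simp
      next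
        case z0': True
        have "w \<in> Vk"
        proof -
          have Lt: "transpose Li *v u2 = Yi *v (transpose K *v u2)"
            by (simp add: Li_def matrix_transpose_mul invP(3) mvmult_assoc)
          have "Yi *v u1 + transpose Li *v u2 = 0"
            unfolding Lt using z0(2) by (metis matrix_vector_right_distrib matrix_vector_mult_0_right)
          hence "LM0 *v w = 0" unfolding wd True y0 z0' LM0_def
            using LMI_mult[of Yi Li C D 0 0 u1 u2 0 0] by simp
          moreover have "transpose M5n *v w = 0"
            using z0(1) M5T_mult[of Xp Xm Um 0 u1 u2 "0::real^'n" "0::real^'p"] unfolding wd True y0 z0'
            by (simp add: Sv_join algebra_simps) (metis add.commute neg_eq_iff_add_eq_0)
          ultimately show ?thesis by (simp add: Vk_def)
        qed
        hence "w \<bullet> w = 0" using orth by blast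
        thus ?thesis using wnz by simp
      qed
    qed
  qed
qed

lemma margin:
  "\<exists>m>0. \<forall>w. 0 \<le> w \<bullet> (G5 *v w) \<longrightarrow> m * (norm (vl w))\<^sup>2 \<le> w \<bullet> (LM0 *v w)"
proof (rule margin_generic[OF LM0_sym Vk_sub _ _ G5_sym _ linear_vl norm_vl pos_all])
  fix k assume "k \<in> Vk"
  thus "LM0 *v k = 0" by (simp add: Vk_def)
  show "G5 *v k = 0" using \<open>k \<in> Vk\<close> by (simp add: Vk_def G5_def mvmult_assoc)
  show "vl k = 0" using \<open>k \<in> Vk\<close> vl_M5[of k] by (simp add: Vk_def)
qed

lemma necessity:
  assumes Zbar: "\<exists>Zb :: real^'n^('n + 'm).
                 pd (transpose (vcat (mat 1) Zb) ** N_mat Phi11 Phi12 Phi22 Xp Xm Um ** vcat (mat 1) Zb)"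
    and trP: "trace P < \<gamma>\<^sup>2"
  shows "\<exists>(Y :: real^'n^'n) (Z :: real^'n^'n) (L :: real^'n^'m) (\<alpha> :: real) (\<beta> :: real).
             pd Y \<and> transpose Z = Z \<and> \<alpha> \<ge> 0 \<and> \<beta> > 0 \<and>
             psd (LMI_block Y L C D \<beta> - \<alpha> *\<^sub>R (M5 Xp Xm Um ** Phi_mat Phi11 Phi12 Phi22 ** transpose (M5 Xp Xm Um :: real^_^('n + ('n + ('m + ('n + 'p))))))) \<and>
             pd (vcat (hcat Y (transpose (C ** Y + D ** L))) (hcat (C ** Y + D ** L) (mat 1))) \<and>
             psd (vcat (hcat Z (mat 1)) (hcat (mat 1) Y)) \<and>
             trace Z < \<gamma>\<^sup>2"
proof -
  obtain m where m: "m > 0" and mg: "\<And>w. 0 \<le> w \<bullet> (G5 *v w) \<Longrightarrow> m * (norm (vl w))\<^sup>2 \<le> w \<bullet> (LM0 *v w)"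
    using margin by blast
  define F where "F = LMI_block Yi Li C D m"
  have sF: "transpose F = F" unfolding F_def by (rule LMI_sym[OF invP(3)])
  have Fform: "w \<bullet> (F *v w) = w \<bullet> (LM0 *v w) - m * (vl w \<bullet> vl w)" for w
  proof -
    obtain x u1 u2 y z where wd: "w = vjoin x (vjoin u1 (vjoin u2 (vjoin y z)))" using w_decomp by blast
    show ?thesis unfolding wd F_def LM0_def LMI_form[OF invP(3)] by simp
  qed
  have hyp: "0 \<le> w \<bullet> (F *v w)" if "0 \<le> w \<bullet> (G5 *v w)" for w
    using mg[OF that] unfolding Fform by (simp add: power2_norm_eq_inner)
  obtain Zb :: "real^'n^('n + 'm)" where Zb: "pd (transpose (vcat (mat 1) Zb) ** N_mat Phi11 Phi12 Phi22 Xp Xm Um ** vcat (mat 1) Zb)"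
    using Zbar by blast
  define \<xi>0 :: "real^'n" where "\<xi>0 = axis undefined 1"
  have xnz: "\<xi>0 \<noteq> 0" by (simp add: \<xi>0_def)
  define w0 where "w0 = vjoin \<xi>0 (vjoin (vl (Zb *v \<xi>0)) (vjoin (vr (Zb *v \<xi>0)) (vjoin (0::real^'n) (0::real^'p))))"
  have "0 < \<xi>0 \<bullet> ((transpose (vcat (mat 1) Zb) ** N_mat Phi11 Phi12 Phi22 Xp Xm Um ** vcat (mat 1) Zb) *v \<xi>0)"
    using Zb xnz by (simp add: pd_def)
  also have "\<dots> = phq (hv \<xi>0 (Zb *v \<xi>0))"
  proof -
    have "vcat (mat 1) Zb *v \<xi>0 = vjoin \<xi>0 (vjoin (vl (Zb *v \<xi>0)) (vr (Zb *v \<xi>0)))"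
      by (simp add: vcat_mult vjoin_vl_vr)
    moreover have "transpose (N_data_left Xp Xm Um) *v vjoin \<xi>0 (vjoin (vl (Zb *v \<xi>0)) (vr (Zb *v \<xi>0))) = hv \<xi>0 (Zb *v \<xi>0)"
      unfolding NLT_mult hv_def using Sv_join[of "vl (Zb *v \<xi>0)" "vr (Zb *v \<xi>0)"]
      by (simp add: vjoin_vl_vr algebra_simps)
    ultimately show ?thesis
      by (simp add: quad_sandwich N_mat_def form_G5 phq_def)
  qed
  also have "\<dots> = w0 \<bullet> (G5 *v w0)"
    unfolding w0_def g5_form by (simp add: vjoin_vl_vr)
  finally have sl: "0 < w0 \<bullet> (G5 *v w0)" .
  obtain l where l0: "l \<ge> 0" and lF: "\<And>w. l * (w \<bullet> (G5 *v w)) \<le> w \<bullet> (F *v w)"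
    using s_lemma[OF sF G5_sym hyp sl] by blast
  have lmi: "psd (F - l *\<^sub>R G5)"
    unfolding psd_def
  proof (intro conjI allI)
    show "transpose (F - l *\<^sub>R G5) = F - l *\<^sub>R G5"
      by (simp add: transpose_diff transpose_scalar sF G5_sym)
    fix w
    show "0 \<le> w \<bullet> ((F - l *\<^sub>R G5) *v w)"
      using lF[of w] by (simp add: matrix_vector_mult_diff_rdistrib scaleR_mult_vec inner_diff_right)
  qed
  have b2: "pd (vcat (hcat Yi (transpose (C ** Yi + D ** Li))) (hcat (C ** Yi + D ** Li) (mat 1)))"
    unfolding pd_def
  proof (intro conjI allI impI)
    show "transpose (vcat (hcat Yi (transpose (C ** Yi + D ** Li))) (hcat (C ** Yi + D ** Li) (mat 1))) =
      vcat (hcat Yi (transpose (C ** Yi + D ** Li))) (hcat (C ** Yi + D ** Li) (mat 1))"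
      by (simp add: transpose_vcat transpose_hcat hcat_vcat invP(3))
    fix v :: "real^('n + 'p)" assume vnz: "v \<noteq> 0"
    obtain a b where vd: "v = vjoin a b" by (metis vjoin_vl_vr)
    define \<xi> where "\<xi> = Yi *v a"
    define c where "c = (C + D ** K) *v \<xi>"
    have a: "a = P *v \<xi>" by (simp add: \<xi>_def invP(5))
    have ca: "(C ** Yi + D ** Li) *v a = c"
      by (simp add: c_def \<xi>_def Li_def matrix_vector_mult_add_rdistrib mvmult_assoc)
    have aa: "a \<bullet> (Yi *v a) = \<xi> \<bullet> (P *v \<xi>)" by (simp add: \<xi>_def invP(5) inner_commute)
    have eq: "v \<bullet> (vcat (hcat Yi (transpose (C ** Yi + D ** Li))) (hcat (C ** Yi + D ** Li) (mat 1)) *v v)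
      = (\<xi> \<bullet> (P *v \<xi>) - c \<bullet> c) + (b + c) \<bullet> (b + c)"
      unfolding vd form_b2 ca aa by (simp add: inner_add_left inner_add_right inner_commute[of c b] algebra_simps)
    show "0 < v \<bullet> (vcat (hcat Yi (transpose (C ** Yi + D ** Li))) (hcat (C ** Yi + D ** Li) (mat 1)) *v v)"
    proof (cases "\<xi> = 0")
      case False
      have "c \<bullet> c < \<xi> \<bullet> (P *v \<xi>)" using PC_pos[OF False] by (simp add: c_def)
      thus ?thesis unfolding eq using inner_ge_zero[of "b + c"] by linarith
    next
      case True
      hence "a = 0" "c = 0" using a by (simp_all add: c_def)
      hence "b \<noteq> 0" using vnz vd by simp
      thus ?thesis unfolding eq using \<open>c = 0\<close> True by simp
    qed
  qed
  have zz: "psd (vcat (hcat P (mat 1)) (hcat (mat 1) Yi))"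
    unfolding psd_def
  proof (intro conjI allI)
    show "transpose (vcat (hcat P (mat 1)) (hcat (mat 1) Yi)) = vcat (hcat P (mat 1)) (hcat (mat 1) Yi)"
      by (simp add: transpose_vcat transpose_hcat hcat_vcat invP(3) Psym)
    fix v :: "real^('n + 'n)"
    obtain a b where vd: "v = vjoin a b" by (metis vjoin_vl_vr)
    have e1: "(Yi *v b) \<bullet> (P *v a) = a \<bullet> b"
      using inner_mat_sym[OF Psym, of "Yi *v b" a] by (simp add: invP(5))
    have "v \<bullet> (vcat (hcat P (mat 1)) (hcat (mat 1) Yi) *v v) = (a + Yi *v b) \<bullet> (P *v (a + Yi *v b))"
      unfolding vd using e1
      by (simp add: blk_simps matrix_vector_right_distrib inner_add_left inner_add_right invP(5) inner_commute algebra_simps)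
    thus "0 \<le> v \<bullet> (vcat (hcat P (mat 1)) (hcat (mat 1) Yi) *v v)" using Ppsd by simp
  qed
  show ?thesis
    apply (rule exI[of _ Yi], rule exI[of _ P], rule exI[of _ Li], rule exI[of _ l], rule exI[of _ m])
    using invP(4) Psym l0 m lmi b2 zz trP unfolding F_def G5_def by blast
qed

end



theorem theorem8:
  fixes Phi11 :: "real^'n^'n" and Phi12 :: "real^'T^'n" and Phi22 :: "real^'T^'T"
    and Xp Xm :: "real^'T^'n" and Um :: "real^'T^'m"
    and C :: "real^'n^'p" and D :: "real^'m^'p" and \<gamma> :: real
  assumes Phi11_sym: "transpose Phi11 = Phi11"
    and Phi22_sym: "transpose Phi22 = Phi22"
    and Phi22_neg: "pd (- Phi22)"
    and data: "\<exists>(As :: real^'n^'n) (Bs :: real^'m^'n) Wm.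
                 Xp = As ** Xm + Bs ** Um + Wm \<and> noise_ok Phi11 Phi12 Phi22 Wm"
    and Zbar: "\<exists>Zb :: real^'n^('n + 'm).
                 pd (transpose (vcat (mat 1) Zb) ** N_mat Phi11 Phi12 Phi22 Xp Xm Um ** vcat (mat 1) Zb)"
    and gamma_pos: "\<gamma> > 0"
  shows "(informative_H2 Phi11 Phi12 Phi22 Xp Xm Um C D \<gamma> \<longleftrightarrow>
          (\<exists>(Y :: real^'n^'n) (Z :: real^'n^'n) (L :: real^'n^'m) (\<alpha> :: real) (\<beta> :: real).
             pd Y \<and> transpose Z = Z \<and> \<alpha> \<ge> 0 \<and> \<beta> > 0 \<and>
             psd (LMI_block Y L C D \<beta> - \<alpha> *\<^sub>R (M5 Xp Xm Um ** Phi_mat Phi11 Phi12 Phi22 ** transpose (M5 Xp Xm Um :: real^_^('n + ('n + ('m + ('n + 'p))))))) \<and>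
             pd (vcat (hcat Y (transpose (C ** Y + D ** L))) (hcat (C ** Y + D ** L) (mat 1))) \<and>
             psd (vcat (hcat Z (mat 1)) (hcat (mat 1) Y)) \<and>
             trace Z < \<gamma>\<^sup>2))
       \<and> (\<forall>(Y :: real^'n^'n) (Z :: real^'n^'n) (L :: real^'n^'m) (\<alpha> :: real) (\<beta> :: real).
             pd Y \<and> transpose Z = Z \<and> \<alpha> \<ge> 0 \<and> \<beta> > 0 \<and>
             psd (LMI_block Y L C D \<beta> - \<alpha> *\<^sub>R (M5 Xp Xm Um ** Phi_mat Phi11 Phi12 Phi22 ** transpose (M5 Xp Xm Um :: real^_^('n + ('n + ('m + ('n + 'p))))))) \<and>
             pd (vcat (hcat Y (transpose (C ** Y + D ** L))) (hcat (C ** Y + D ** L) (mat 1))) \<and>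
             psd (vcat (hcat Z (mat 1)) (hcat (mat 1) Y)) \<and>
             trace Z < \<gamma>\<^sup>2
           \<longrightarrow> (let K = L ** matrix_inv Y in
                 \<forall>(A, B) \<in> Sigma_set Phi11 Phi12 Phi22 Xp Xm Um.
                   schur_stable (A + B ** K) \<and>
                   summable (h2_sq_terms (A + B ** K) (C + D ** K)) \<and>
                   h2_norm (A + B ** K) (C + D ** K) < \<gamma>))"
  proof -
  have part2: "\<forall>(Y :: real^'n^'n) (Z :: real^'n^'n) (L :: real^'n^'m) (\<alpha> :: real) (\<beta> :: real).
             pd Y \<and> transpose Z = Z \<and> \<alpha> \<ge> 0 \<and> \<beta> > 0 \<and>
             psd (LMI_block Y L C D \<beta> - \<alpha> *\<^sub>R (M5 Xp Xm Um ** Phi_mat Phi11 Phi12 Phi22 ** transpose (M5 Xp Xm Um :: real^_^('n + ('n + ('m + ('n + 'p))))))) \<and>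
             pd (vcat (hcat Y (transpose (C ** Y + D ** L))) (hcat (C ** Y + D ** L) (mat 1))) \<and>
             psd (vcat (hcat Z (mat 1)) (hcat (mat 1) Y)) \<and>
             trace Z < \<gamma>\<^sup>2
           \<longrightarrow> (let K = L ** matrix_inv Y in
                 \<forall>(A, B) \<in> Sigma_set Phi11 Phi12 Phi22 Xp Xm Um.
                   schur_stable (A + B ** K) \<and>
                   summable (h2_sq_terms (A + B ** K) (C + D ** K)) \<and>
                   h2_norm (A + B ** K) (C + D ** K) < \<gamma>)"
    using lmi_part(2)[OF _ _ _ _ _ _ _ gamma_pos] by blast
  have "informative_H2 Phi11 Phi12 Phi22 Xp Xm Um C D \<gamma> \<longleftrightarrow>
          (\<exists>(Y :: real^'n^'n) (Z :: real^'n^'n) (L :: real^'n^'m) (\<alpha> :: real) (\<beta> :: real).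
             pd Y \<and> transpose Z = Z \<and> \<alpha> \<ge> 0 \<and> \<beta> > 0 \<and>
             psd (LMI_block Y L C D \<beta> - \<alpha> *\<^sub>R (M5 Xp Xm Um ** Phi_mat Phi11 Phi12 Phi22 ** transpose (M5 Xp Xm Um :: real^_^('n + ('n + ('m + ('n + 'p))))))) \<and>
             pd (vcat (hcat Y (transpose (C ** Y + D ** L))) (hcat (C ** Y + D ** L) (mat 1))) \<and>
             psd (vcat (hcat Z (mat 1)) (hcat (mat 1) Y)) \<and>
             trace Z < \<gamma>\<^sup>2)"
  proof
    assume "informative_H2 Phi11 Phi12 Phi22 Xp Xm Um C D \<gamma>"
    then obtain P K where pdP: "pd P" and trP: "trace P < \<gamma>\<^sup>2"
      and inf: "\<forall>(A, B) \<in> Sigma_set Phi11 Phi12 Phi22 Xp Xm Um.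
          pd (P - transpose (A + B ** K) ** P ** (A + B ** K) - transpose (C + D ** K) ** (C + D ** K))"
      unfolding informative_H2_def by blast
    obtain As :: "real^'n^'n" and Bs :: "real^'m^'n" and Wm where d1: "Xp = As ** Xm + Bs ** Um + Wm"
      and d2: "noise_ok Phi11 Phi12 Phi22 Wm" using data by blast
    interpret N: nec Phi11 Phi12 Phi22 Xp Xm Um C D P K As Bs Wm
      using Phi11_sym Phi22_sym Phi22_neg pdP inf d1 d2 by unfold_locales auto
    show "\<exists>(Y :: real^'n^'n) (Z :: real^'n^'n) (L :: real^'n^'m) (\<alpha> :: real) (\<beta> :: real).
             pd Y \<and> transpose Z = Z \<and> \<alpha> \<ge> 0 \<and> \<beta> > 0 \<and>
             psd (LMI_block Y L C D \<beta> - \<alpha> *\<^sub>R (M5 Xp Xm Um ** Phi_mat Phi11 Phi12 Phi22 ** transpose (M5 Xp Xm Um :: real^_^('n + ('n + ('m + ('n + 'p))))))) \<and>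
             pd (vcat (hcat Y (transpose (C ** Y + D ** L))) (hcat (C ** Y + D ** L) (mat 1))) \<and>
             psd (vcat (hcat Z (mat 1)) (hcat (mat 1) Y)) \<and>
             trace Z < \<gamma>\<^sup>2"
      by (rule N.necessity[OF Zbar trP])
  next
    assume "\<exists>(Y :: real^'n^'n) (Z :: real^'n^'n) (L :: real^'n^'m) (\<alpha> :: real) (\<beta> :: real).
             pd Y \<and> transpose Z = Z \<and> \<alpha> \<ge> 0 \<and> \<beta> > 0 \<and>
             psd (LMI_block Y L C D \<beta> - \<alpha> *\<^sub>R (M5 Xp Xm Um ** Phi_mat Phi11 Phi12 Phi22 ** transpose (M5 Xp Xm Um :: real^_^('n + ('n + ('m + ('n + 'p))))))) \<and>
             pd (vcat (hcat Y (transpose (C ** Y + D ** L))) (hcat (C ** Y + D ** L) (mat 1))) \<and>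
             psd (vcat (hcat Z (mat 1)) (hcat (mat 1) Y)) \<and>
             trace Z < \<gamma>\<^sup>2"
    then obtain Y Z L \<alpha> \<beta> where c: "pd (Y :: real^'n^'n)" "\<alpha> \<ge> 0" "\<beta> > 0"
      "psd (LMI_block Y L C D \<beta> - \<alpha> *\<^sub>R (M5 Xp Xm Um ** Phi_mat Phi11 Phi12 Phi22 ** transpose (M5 Xp Xm Um :: real^_^('n + ('n + ('m + ('n + 'p)))))))"
      "pd (vcat (hcat Y (transpose (C ** Y + D ** L))) (hcat (C ** Y + D ** L) (mat 1)))"
      "psd (vcat (hcat Z (mat 1)) (hcat (mat 1) Y))" "trace Z < \<gamma>\<^sup>2"
      by blast
    show "informative_H2 Phi11 Phi12 Phi22 Xp Xm Um C D \<gamma>"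
      by (rule lmi_part(1)[OF c gamma_pos])
  qed
  with part2 show ?thesis by blast
qed

end
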